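(* Let $E$ be finite, $X_+=E^{\mathbb{Z}_+}$, $X_-=E^{-\mathbb{N}}$, $X=E^{\mathbb{Z}}=X_-\times X_+$. Let $\phi:X_+\to\mathbb{R}$ be continuous and satisfy the extensibility condition, and let $\nu$ be a half-line Gibbs measure for $\phi$. Let $\rho$ be the uniform Bernoulli measure on $X_-$, $\mu_0:=\rho\times\nu$ on $X$, and $\mu_n:=\mu_0\circ S^{-n}$ for $n\ge0$. Assume a subsequence $(\mu_{n_k})_{k\ge0}$ converges in the weak$^*$ topology to a probability measure $\mu$ on $X$. Then for $\mu$-almost every $x\in X$, $$\mu(x_0|x_{-\infty}^{-1},x_1^\infty)=\overset{\rightleftharpoons}{\gamma}^{\phi}_{\{0\}}(x_0|x_{-\infty}^{-1},x_1^\infty)=\lim_{n\to\infty}\frac{\exp(S_{n+1}\phi(x_{-n}^{-1}x_0x_1^\infty))}{\sum_{\bar a_0\in E}\exp(S_{n+1}\phi(x_{-n}^{-1}\bar a_0x_1^\infty))},$$ and hence $\mu$ is a Gibbs measure for the whole-line specification $\overset{\rightleftharpoons}{\gamma}^{\phi}$.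
   Context: $S$ is the left shift on $X_+$ and on $X$, $S_n\phi=\sum_{k=0}^{n-1}\phi\circ S^k$; strings like $x_{-n}^{-1}a x_1^\infty$ are viewed as elements of $X_+$ by re-indexing their first coordinate as $0$. Extensibility condition: for all $a_0,b_0\in E$, $\sum_{i=0}^n(\phi(x_{-i}^{-1}b_0x_1^\infty)-\phi(x_{-i}^{-1}a_0x_1^\infty))$ converges uniformly in $x\in X$ as $n\to\infty$. Half-line Gibbs measure: a probability $\nu$ on $X_+$ such that for every $n\ge1$, $\nu(x_0^{n-1}=a_0^{n-1}\mid x_n^\infty)=\frac{\exp(S_n\phi(a_0^{n-1}x_n^\infty))}{\sum_{\bar a_0^{n-1}}\exp(S_n\phi(\bar a_0^{n-1}x_n^\infty))}$ $\nu$-a.s. For $\phi$ extensible, the limits $\overset{\rightleftharpoons}{\gamma}^{\phi}_{\{i\}}(\sigma_i|\omega_{\{i\}^c})=\lim_{p\to\infty}e^{S_{i+p+1}\phi(\omega_{-p}^{i-1}\sigma_i\omega_{i+1}^\infty)}/\sum_{\bar\omega_i}e^{S_{i+p+1}\phi(\omega_{-p}^{i-1}\bar\omega_i\omega_{i+1}^\infty)}$ exist and are the single-site kernels of a unique translation-invariant quasilocal non-null specification $\overset{\rightleftharpoons}{\gamma}^{\phi}$ on $X$; a probability measure on $X$ is Gibbs for it iff for each $i$ the conditional law of $x_i$ given $x_{\{i\}^c}$ is $\overset{\rightleftharpoons}{\gamma}^{\phi}_{\{i\}}$ a.s. *)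

theory Defs
  imports "HOL-Probability.Probability"
begin

text \<open>Alphabet E: a finite type with the discrete topology.
  X_+ = nat \<Rightarrow> 'e, X = int \<Rightarrow> 'e (product topologies, Borel sigma-algebras).\<close>

definition Sn :: "((nat \<Rightarrow> 'e) \<Rightarrow> real) \<Rightarrow> nat \<Rightarrow> (nat \<Rightarrow> 'e) \<Rightarrow> real" where
  "Sn \<phi> n z = (\<Sum>k<n. \<phi> (\<lambda>j. z (j + k)))"

text \<open>The string x_{-p}^{i-1} a x_{i+1}^\<infinity>, re-indexed so that its first coordinate
  (the one coming from position -p) becomes 0.\<close>
definition splice :: "(int \<Rightarrow> 'e) \<Rightarrow> int \<Rightarrow> 'e \<Rightarrow> nat \<Rightarrow> (nat \<Rightarrow> 'e)" where
  "splice x i a p = (\<lambda>k. if int k - int p = i then a else x (int k - int p))"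

definition extensible :: "((nat \<Rightarrow> 'e) \<Rightarrow> real) \<Rightarrow> bool" where
  "extensible \<phi> \<longleftrightarrow> (\<forall>a0 b0. uniformly_convergent_on UNIV
      (\<lambda>n (x :: int \<Rightarrow> 'e). \<Sum>i\<le>n. (\<phi> (splice x 0 b0 i) - \<phi> (splice x 0 a0 i))))"

definition coord_algebra :: "'i set \<Rightarrow> ('i \<Rightarrow> 'e) measure" where
  "coord_algebra J = sigma UNIV {{y. y j = b} | j b. j \<in> J}"

definition half_line_gibbs :: "((nat \<Rightarrow> 'e::{finite,discrete_topology}) \<Rightarrow> real) \<Rightarrow> (nat \<Rightarrow> 'e) measure \<Rightarrow> bool" where
  "half_line_gibbs \<phi> \<nu> \<longleftrightarrow> prob_space \<nu> \<and> sets \<nu> = sets borel \<and>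
     (\<forall>n\<ge>1. \<forall>a :: nat \<Rightarrow> 'e. AE x in \<nu>.
        real_cond_exp \<nu> (coord_algebra {n..}) (indicator {y. \<forall>k<n. y k = a k}) x
        = exp (Sn \<phi> n (\<lambda>k. if k < n then a k else x k))
          / (\<Sum>b\<in>Pi\<^sub>E {..<n} (\<lambda>_. UNIV). exp (Sn \<phi> n (\<lambda>k. if k < n then b k else x k))))"

definition gamma :: "((nat \<Rightarrow> 'e::{finite,discrete_topology}) \<Rightarrow> real) \<Rightarrow> int \<Rightarrow> 'e \<Rightarrow> (int \<Rightarrow> 'e) \<Rightarrow> real" where
  "gamma \<phi> i a x = lim (\<lambda>p. exp (Sn \<phi> (nat (i + int p + 1)) (splice x i a p))
      / (\<Sum>b\<in>UNIV. exp (Sn \<phi> (nat (i + int p + 1)) (splice x i b p))))"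

definition whole_line_gibbs :: "((nat \<Rightarrow> 'e::{finite,discrete_topology}) \<Rightarrow> real) \<Rightarrow> (int \<Rightarrow> 'e) measure \<Rightarrow> bool" where
  "whole_line_gibbs \<phi> \<mu> \<longleftrightarrow> prob_space \<mu> \<and> sets \<mu> = sets borel \<and>
     (\<forall>i a. AE x in \<mu>. real_cond_exp \<mu> (coord_algebra (- {i})) (indicator {y. y i = a}) x = gamma \<phi> i a x)"

text \<open>Uniform Bernoulli measure on X_- = E^{-N}, coordinate k standing for position -(k+1).\<close>
definition rho :: "(nat \<Rightarrow> 'e::{finite,discrete_topology}) measure" where
  "rho = PiM UNIV (\<lambda>_. measure_pmf (pmf_of_set UNIV))"

definition glue :: "(nat \<Rightarrow> 'e) \<times> (nat \<Rightarrow> 'e) \<Rightarrow> (int \<Rightarrow> 'e)" where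
  "glue uv = (\<lambda>i. if i < 0 then fst uv (nat (- i - 1)) else snd uv (nat i))"

text \<open>mu_0 = rho \<times> nu on X = X_- \<times> X_+, and mu_n = mu_0 \<circ> S^{-n}.\<close>
definition mu0 :: "(nat \<Rightarrow> 'e::{finite,discrete_topology}) measure \<Rightarrow> (int \<Rightarrow> 'e) measure" where
  "mu0 \<nu> = distr (rho \<Otimes>\<^sub>M \<nu>) borel glue"

definition mun :: "(nat \<Rightarrow> 'e::{finite,discrete_topology}) measure \<Rightarrow> nat \<Rightarrow> (int \<Rightarrow> 'e) measure" where
  "mun \<nu> n = distr (mu0 \<nu>) borel (\<lambda>x i. x (i + int n))"

definition weak_star_conv :: "(nat \<Rightarrow> (int \<Rightarrow> 'e::{finite,discrete_topology}) measure) \<Rightarrow> (int \<Rightarrow> 'e) measure \<Rightarrow> bool" where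
  "weak_star_conv M \<mu> \<longleftrightarrow> (\<forall>f :: (int \<Rightarrow> 'e) \<Rightarrow> real. continuous_on UNIV f \<longrightarrow>
      (\<lambda>k. integral\<^sup>L (M k) f) \<longlonglongrightarrow> integral\<^sup>L \<mu> f)"

end

theory Submission
  imports Defs
begin


definition cyl :: "('i \<times> 'e) set \<Rightarrow> ('i \<Rightarrow> 'e) set" where
  "cyl S = {y. \<forall>(j,b)\<in>S. y j = b}"

lemma open_coord:
  "open {y :: 'i \<Rightarrow> 'e::discrete_topology. y j = b}"
proof -
  have "open ((\<lambda>y::'i\<Rightarrow>'e. y j) -` {b})"
    using open_vimage[of "{b}" "\<lambda>y::'i\<Rightarrow>'e. y j"] Topological_Spaces.open_discrete[of "{b}"] by simp
  moreover have "(\<lambda>y::'i\<Rightarrow>'e. y j) -` {b} = {y. y j = b}" by auto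
  ultimately show ?thesis by simp
qed

lemma open_cyl_union:
  fixes U :: "('i \<Rightarrow> 'e::discrete_topology) set"
  assumes "open U"
  shows "U = \<Union>(cyl ` {S. finite S \<and> cyl S \<subseteq> U})"
proof
  show "\<Union>(cyl ` {S. finite S \<and> cyl S \<subseteq> U}) \<subseteq> U" by auto
  show "U \<subseteq> \<Union>(cyl ` {S. finite S \<and> cyl S \<subseteq> U})"
  proof
    fix x assume "x \<in> U"
    have "openin (product_topology (\<lambda>i. euclidean) UNIV) U"
      using assms unfolding open_fun_def by auto
    from product_topology_open_contains_basis[OF this \<open>x \<in> U\<close>]
    obtain X where H: "x \<in> (\<Pi>\<^sub>E i\<in>UNIV. X i)" "finite {i. X i \<noteq> UNIV}"
        "(\<Pi>\<^sub>E i\<in>UNIV. X i) \<subseteq> U"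
      by auto
    define S where "S = (\<lambda>i. (i, x i)) ` {i. X i \<noteq> UNIV}"
    have "finite S" using H(2) by (simp add: S_def)
    moreover have "cyl S \<subseteq> U"
    proof
      fix y assume "y \<in> cyl S"
      have "y \<in> (\<Pi>\<^sub>E i\<in>UNIV. X i)"
      proof (auto simp: PiE_iff)
        fix i show "y i \<in> X i"
        proof (cases "X i = UNIV")
          case False
          then have "(i, x i) \<in> S" by (auto simp: S_def)
          then have "y i = x i" using \<open>y \<in> cyl S\<close> by (auto simp: cyl_def)
          then show ?thesis using H(1) by auto
        qed auto
      qed
      then show "y \<in> U" using H(3) by auto
    qed
    moreover have "x \<in> cyl S" by (auto simp: S_def cyl_def)
    ultimately show "x \<in> \<Union>(cyl ` {S. finite S \<and> cyl S \<subseteq> U})" by auto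
  qed
qed

definition coordgen :: "'i set \<Rightarrow> ('i \<Rightarrow> 'e) set set" where
  "coordgen J = {{y. y j = b} | j b. j \<in> J}"

lemma sets_coord_algebra: "sets (coord_algebra J) = sigma_sets UNIV (coordgen J)"
  unfolding coord_algebra_def coordgen_def by (rule sets_measure_of) auto

lemma space_coord_algebra[simp]: "space (coord_algebra J) = UNIV"
  unfolding coord_algebra_def by (rule space_measure_of) auto

lemma cyl_in_sigma:
  fixes S :: "('i \<times> 'e) set"
  assumes "finite S" "fst ` S \<subseteq> J"
  shows "cyl S \<in> sigma_sets UNIV (coordgen J)"
  using assms
proof (induction S rule: finite_induct)
  case empty
  have "UNIV \<in> sigma_sets (UNIV::('i \<Rightarrow> 'e) set) (coordgen J)" by (rule sigma_sets_top)
  then show ?case by (simp add: cyl_def)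
next
  case (insert p S)
  obtain j b where p: "p = (j, b)" by (cases p)
  have "cyl (insert p S) = {y. y j = b} \<inter> cyl S" by (auto simp: cyl_def p)
  moreover have "{y. y j = b} \<in> sigma_sets UNIV (coordgen J)"
    using insert.prems by (intro sigma_sets.Basic) (auto simp: coordgen_def p)
  interpret S: sigma_algebra "UNIV :: ('i \<Rightarrow> 'e) set" "sigma_sets UNIV (coordgen J)"
    by (rule sigma_algebra_sigma_sets) auto
  show ?case using insert \<open>{y. y j = b} \<in> _\<close> \<open>cyl (insert p S) = _\<close> by (auto intro: S.Int)
qed

lemma sets_borel_fun:
  "sets (borel :: ('i::countable \<Rightarrow> 'e::{finite,discrete_topology}) measure)
     = sigma_sets UNIV (coordgen UNIV)"
proof -
  interpret S: sigma_algebra "UNIV :: ('i \<Rightarrow> 'e) set" "sigma_sets UNIV (coordgen UNIV)"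
    by (rule sigma_algebra_sigma_sets) auto
  have "sigma_sets UNIV {S :: ('i \<Rightarrow> 'e) set. open S} \<subseteq> sigma_sets UNIV (coordgen UNIV)"
  proof (rule S.sigma_sets_subset, safe)
    fix U :: "('i \<Rightarrow> 'e) set" assume "open U"
    have "countable {S :: ('i \<times> 'e) set. finite S \<and> cyl S \<subseteq> U}"
      by (rule countable_subset[OF _ countable_Collect_finite]) auto
    then have "countable (cyl ` {S. finite S \<and> cyl S \<subseteq> U})" by auto
    moreover have "cyl ` {S. finite S \<and> cyl S \<subseteq> U} \<subseteq> sigma_sets UNIV (coordgen UNIV)"
      by (auto intro!: cyl_in_sigma)
    ultimately have "\<Union>(cyl ` {S. finite S \<and> cyl S \<subseteq> U}) \<in> sigma_sets UNIV (coordgen UNIV)"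
      by (rule S.countable_Union)
    then show "U \<in> sigma_sets UNIV (coordgen UNIV)"
      using open_cyl_union[OF \<open>open U\<close>] by simp
  qed
  moreover have "sigma_sets UNIV (coordgen UNIV) \<subseteq> sigma_sets UNIV {S :: ('i \<Rightarrow> 'e) set. open S}"
    by (rule sigma_sets_mono) (auto simp: coordgen_def open_coord)
  ultimately show ?thesis unfolding sets_borel by auto
qed

lemma measurable_to_fun:
  fixes f :: "'a \<Rightarrow> ('i::countable \<Rightarrow> 'e::{finite,discrete_topology})"
  assumes "\<And>j b. {x\<in>space M. f x j = b} \<in> sets M"
  shows "f \<in> measurable M borel"
proof -
  have "f \<in> measurable M (measure_of UNIV (coordgen UNIV) (\<lambda>_. 0))"
  proof (rule measurable_measure_of)
    show "coordgen UNIV \<subseteq> Pow UNIV" by auto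
    fix A :: "('i \<Rightarrow> 'e) set" assume "A \<in> coordgen UNIV"
    then obtain j b where "A = {y. y j = b}" by (auto simp: coordgen_def)
    then have "f -` A \<inter> space M = {x\<in>space M. f x j = b}" by auto
    then show "f -` A \<inter> space M \<in> sets M" using assms by simp
  qed auto
  moreover have "sets (measure_of UNIV (coordgen UNIV) (\<lambda>_. 0)) = sets (borel :: ('i \<Rightarrow> 'e) measure)"
    by (simp add: sets_borel_fun sets_measure_of_conv coordgen_def)
  ultimately show ?thesis by (simp add: measurable_def space_borel)
qed

lemma measurable_from_coord:
  fixes \<tau> :: "('k \<Rightarrow> 'e) \<Rightarrow> ('i::countable \<Rightarrow> 'e::{finite,discrete_topology})"
  assumes "\<And>j. (\<exists>c. \<forall>x. \<tau> x j = c) \<or> (\<exists>k\<in>J. \<forall>x. \<tau> x j = x k)"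
  shows "\<tau> \<in> measurable (coord_algebra J) borel"
proof (rule measurable_to_fun)
  fix j b
  show "{x \<in> space (coord_algebra J). \<tau> x j = b} \<in> sets (coord_algebra J)"
  proof (cases "\<exists>c. \<forall>x. \<tau> x j = c")
    case True
    then obtain c where c: "\<forall>x. \<tau> x j = c" by auto
    show ?thesis
    proof (cases "c = b")
      case True then show ?thesis using c by (simp add: sets.top[of "coord_algebra J", simplified])
    next
      case False
      then have "{x \<in> space (coord_algebra J). \<tau> x j = b} = {}" using c by auto
      then show ?thesis by simp
    qed
  next
    case False
    then obtain k where k: "k \<in> J" "\<forall>x. \<tau> x j = x k" using assms by blast
    then have "{x \<in> space (coord_algebra J). \<tau> x j = b} = {y. y k = b}" by auto
    also have "\<dots> \<in> sets (coord_algebra J)"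
      unfolding sets_coord_algebra using k by (intro sigma_sets.Basic) (auto simp: coordgen_def)
    finally show ?thesis .
  qed
qed

lemma sets_coord_sub_borel:
  "sets (coord_algebra J) \<subseteq> sets (borel :: ('i::countable \<Rightarrow> 'e::{finite,discrete_topology}) measure)"
  unfolding sets_coord_algebra sets_borel_fun
  by (rule sigma_sets_mono) (auto simp: coordgen_def intro: sigma_sets.Basic)

lemma coord_subalg:
  fixes M :: "('i::countable \<Rightarrow> 'e::{finite,discrete_topology}) measure"
  assumes "finite_measure M" "sets M = sets borel"
  shows "sigma_finite_subalgebra M (coord_algebra J)"
proof (rule finite_measure_subalgebra_is_sigma_finite)
  have "space M = UNIV" using assms(2) by (metis sets_eq_imp_space_eq space_borel)
  then show "finite_measure_subalgebra M (coord_algebra J)"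
    using assms sets_coord_sub_borel unfolding finite_measure_subalgebra_def finite_measure_subalgebra_axioms_def subalgebra_def
    by auto
qed



definition Dsum :: "((nat \<Rightarrow> 'e) \<Rightarrow> real) \<Rightarrow> 'e \<Rightarrow> 'e \<Rightarrow> nat \<Rightarrow> (int \<Rightarrow> 'e) \<Rightarrow> real" where
  "Dsum \<phi> a b n x = (\<Sum>i\<le>n. (\<phi> (splice x 0 b i) - \<phi> (splice x 0 a i)))"

definition Lim :: "((nat \<Rightarrow> 'e) \<Rightarrow> real) \<Rightarrow> 'e \<Rightarrow> 'e \<Rightarrow> (int \<Rightarrow> 'e) \<Rightarrow> real" where
  "Lim \<phi> a b x = lim (\<lambda>n. Dsum \<phi> a b n x)"

definition Gam :: "((nat \<Rightarrow> 'e::finite) \<Rightarrow> real) \<Rightarrow> 'e \<Rightarrow> (int \<Rightarrow> 'e) \<Rightarrow> real" where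
  "Gam \<phi> a x = 1 / (\<Sum>b\<in>UNIV. exp (Lim \<phi> a b x))"

definition Rt :: "((nat \<Rightarrow> 'e::finite) \<Rightarrow> real) \<Rightarrow> 'e \<Rightarrow> (int \<Rightarrow> 'e) \<Rightarrow> nat \<Rightarrow> real" where
  "Rt \<phi> a x n = exp (Sn \<phi> (n + 1) (splice x 0 a n)) / (\<Sum>b\<in>UNIV. exp (Sn \<phi> (n + 1) (splice x 0 b n)))"

lemma Sn_splice: "Sn \<phi> (n + 1) (splice x 0 b n) = (\<Sum>i\<le>n. \<phi> (splice x 0 b i))"
proof -
  have eq: "(\<lambda>j. splice x 0 b n (j + k)) = splice x 0 b (n - k)" if "k \<le> n" for k
    using that by (auto simp: splice_def fun_eq_iff of_nat_diff algebra_simps)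
  have "Sn \<phi> (n + 1) (splice x 0 b n) = (\<Sum>k<Suc n. \<phi> (splice x 0 b (n - k)))"
    unfolding Sn_def by (intro sum.cong) (auto simp: eq)
  also have "\<dots> = (\<Sum>k<Suc n. \<phi> (splice x 0 b k))"
    using sum.nat_diff_reindex[of "\<lambda>k. \<phi> (splice x 0 b k)" "Suc n"] by simp
  finally show ?thesis by (simp add: lessThan_Suc_atMost)
qed

lemma Rt_alt: "Rt \<phi> a x n = 1 / (\<Sum>b\<in>UNIV. exp (Dsum \<phi> a b n x))"
proof -
  define A where "A b = (\<Sum>i\<le>n. \<phi> (splice x 0 b i))" for b
  have "Rt \<phi> a x n = exp (A a) / (\<Sum>b\<in>UNIV. exp (A b))"
    unfolding Rt_def Sn_splice A_def ..
  also have "\<dots> = 1 / (\<Sum>b\<in>UNIV. exp (A b) / exp (A a))"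
    by (simp add: sum_divide_distrib[symmetric])
  also have "(\<lambda>b. exp (A b) / exp (A a)) = (\<lambda>b. exp (Dsum \<phi> a b n x))"
    by (auto simp: Dsum_def A_def sum_subtractf exp_diff fun_eq_iff)
  finally show ?thesis .
qed

lemma Dsum_same[simp]: "Dsum \<phi> a a n x = 0"
  by (simp add: Dsum_def)

lemma ext_unif:
  assumes "extensible \<phi>"
  shows "uniform_limit UNIV (\<lambda>n x. Dsum \<phi> a b n x) (Lim \<phi> a b) sequentially"
proof -
  from assms have "uniformly_convergent_on UNIV (\<lambda>n x. Dsum \<phi> a b n x)"
    unfolding extensible_def Dsum_def by blast
  then obtain l where l: "uniform_limit UNIV (\<lambda>n x. Dsum \<phi> a b n x) l sequentially"
    unfolding uniformly_convergent_on_def by blast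
  have "l x = Lim \<phi> a b x" for x
  proof -
    have "(\<lambda>n. Dsum \<phi> a b n x) \<longlonglongrightarrow> l x"
      using tendsto_uniform_limitI[OF l] by auto
    then show ?thesis unfolding Lim_def by (simp add: limI)
  qed
  then have "l = Lim \<phi> a b" by auto
  with l show ?thesis by simp
qed

lemma ext_tendsto:
  assumes "extensible \<phi>"
  shows "(\<lambda>n. Dsum \<phi> a b n x) \<longlonglongrightarrow> Lim \<phi> a b x"
  using tendsto_uniform_limitI[OF ext_unif[OF assms]] by auto

lemma Lim_same[simp]: "Lim \<phi> a a x = 0"
  by (simp add: Lim_def)

lemma sum_exp_ge1:
  fixes u :: "'e::finite \<Rightarrow> real"
  assumes "u a = 0"
  shows "1 \<le> (\<Sum>b\<in>UNIV. exp (u b))"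
proof -
  have "exp (u a) \<le> (\<Sum>b\<in>UNIV. exp (u b))"
    by (rule member_le_sum) auto
  then show ?thesis using assms by simp
qed

lemma exp_diff_bound:
  fixes u v :: real
  shows "\<bar>exp u - exp v\<bar> \<le> max (exp u) (exp v) * \<bar>u - v\<bar>"
proof -
  have key: "exp p - exp q \<le> exp p * (p - q)" if "q \<le> p" for p q :: real
  proof -
    have "1 + (q - p) \<le> exp (q - p)" by (rule exp_ge_add_one_self)
    then have "1 - (p - q) \<le> exp (q - p)" by linarith
    then have "exp p * (1 - (p - q)) \<le> exp p * exp (q - p)" by simp
    also have "exp p * exp (q - p) = exp q" by (simp add: exp_add[symmetric])
    finally show ?thesis by (simp add: algebra_simps)
  qed
  show ?thesis
  proof (cases "v \<le> u")
    case True
    have "exp v \<le> exp u" using True by simp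
    then show ?thesis using key[OF True] True by (simp add: abs_if max_def)
  next
    case False
    then have "u \<le> v" by simp
    have "exp u \<le> exp v" using \<open>u \<le> v\<close> by simp
    then show ?thesis using key[OF \<open>u \<le> v\<close>] \<open>u \<le> v\<close> by (simp add: abs_if max_def)
  qed
qed

lemma inv_sum_exp_bound:
  fixes u v :: "'e::finite \<Rightarrow> real"
  assumes "u a = 0" "v a = 0"
  shows "\<bar>1 / (\<Sum>b\<in>UNIV. exp (u b)) - 1 / (\<Sum>b\<in>UNIV. exp (v b))\<bar> \<le> (\<Sum>b\<in>UNIV. \<bar>u b - v b\<bar>)"
proof -
  define S where "S = (\<Sum>b\<in>UNIV. exp (u b))"
  define T where "T = (\<Sum>b\<in>UNIV. exp (v b))"
  have S1: "1 \<le> S" unfolding S_def by (rule sum_exp_ge1[of u a, OF assms(1)])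
  have T1: "1 \<le> T" unfolding T_def by (rule sum_exp_ge1[of v a, OF assms(2)])
  have eu: "exp (u b) \<le> S" for b unfolding S_def by (rule member_le_sum) auto
  have ev: "exp (v b) \<le> T" for b unfolding T_def by (rule member_le_sum) auto
  have "max S T \<le> S * T"
    using S1 T1 by (auto simp: max_def)
  have "\<bar>T - S\<bar> = \<bar>\<Sum>b\<in>UNIV. exp (v b) - exp (u b)\<bar>"
    by (simp add: S_def T_def sum_subtractf)
  also have "\<dots> \<le> (\<Sum>b\<in>UNIV. \<bar>exp (v b) - exp (u b)\<bar>)" by (rule sum_abs)
  also have "\<dots> \<le> (\<Sum>b\<in>UNIV. (S * T) * \<bar>u b - v b\<bar>)"
  proof (rule sum_mono)
    fix b
    have "\<bar>exp (v b) - exp (u b)\<bar> \<le> max (exp (v b)) (exp (u b)) * \<bar>v b - u b\<bar>"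
      by (rule exp_diff_bound)
    also have "\<dots> \<le> max S T * \<bar>u b - v b\<bar>"
      using eu[of b] ev[of b] unfolding abs_minus_commute[of "v b"] by (intro mult_right_mono) auto
    also have "\<dots> \<le> (S * T) * \<bar>u b - v b\<bar>"
      using \<open>max S T \<le> S * T\<close> by (intro mult_right_mono) auto
    finally show "\<bar>exp (v b) - exp (u b)\<bar> \<le> (S * T) * \<bar>u b - v b\<bar>" .
  qed
  also have "\<dots> = (S * T) * (\<Sum>b\<in>UNIV. \<bar>u b - v b\<bar>)" by (simp add: sum_distrib_left)
  finally have *: "\<bar>T - S\<bar> \<le> (S * T) * (\<Sum>b\<in>UNIV. \<bar>u b - v b\<bar>)" .
  have "\<bar>1 / S - 1 / T\<bar> = \<bar>T - S\<bar> / (S * T)"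
    using S1 T1 by (simp add: field_simps abs_div)
  also have "\<dots> \<le> (\<Sum>b\<in>UNIV. \<bar>u b - v b\<bar>)"
    using * S1 T1 by (simp add: divide_le_eq mult.commute)
  finally show ?thesis unfolding S_def T_def .
qed

lemma Rt_Gam_bound:
  "\<bar>Rt \<phi> a x n - Gam \<phi> a x\<bar> \<le> (\<Sum>b\<in>UNIV. \<bar>Dsum \<phi> a b n x - Lim \<phi> a b x\<bar>)"
  unfolding Rt_alt Gam_def
  by (rule inv_sum_exp_bound[where a = a]) auto

lemma Rt_Gam_unif:
  assumes "extensible \<phi>" "e > 0"
  shows "\<forall>\<^sub>F n in sequentially. \<forall>x. \<bar>Rt \<phi> a x n - Gam \<phi> a x\<bar> \<le> e"
proof -
  define e' where "e' = e / real (card (UNIV :: 'a set))"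
  have cpos: "card (UNIV :: 'a set) > 0" by (simp add: finite_UNIV_card_ge_0)
  have e': "e' > 0" using assms(2) cpos unfolding e'_def by simp
  have "\<forall>b\<in>UNIV. \<forall>\<^sub>F n in sequentially. \<forall>x. dist (Dsum \<phi> a b n x) (Lim \<phi> a b x) < e'"
    using ext_unif[OF assms(1)] e' unfolding uniform_limit_iff by auto
  then have "\<forall>\<^sub>F n in sequentially. \<forall>b\<in>UNIV. \<forall>x. dist (Dsum \<phi> a b n x) (Lim \<phi> a b x) < e'"
    by (subst eventually_ball_finite_distrib) auto
  then show ?thesis
  proof (rule eventually_mono)
    fix n assume H: "\<forall>b\<in>UNIV. \<forall>x. dist (Dsum \<phi> a b n x) (Lim \<phi> a b x) < e'"
    show "\<forall>x. \<bar>Rt \<phi> a x n - Gam \<phi> a x\<bar> \<le> e"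
    proof
      fix x
      have "\<bar>Rt \<phi> a x n - Gam \<phi> a x\<bar> \<le> (\<Sum>b\<in>UNIV. \<bar>Dsum \<phi> a b n x - Lim \<phi> a b x\<bar>)"
        by (rule Rt_Gam_bound)
      also have "\<dots> \<le> (\<Sum>b\<in>(UNIV::'a set). e')"
        using H by (intro sum_mono) (auto simp: dist_real_def less_imp_le)
      also have "\<dots> = e" using cpos by (simp add: e'_def)
      finally show "\<bar>Rt \<phi> a x n - Gam \<phi> a x\<bar> \<le> e" .
    qed
  qed
qed

lemma Rt_tendsto:
  assumes "extensible \<phi>"
  shows "(\<lambda>n. Rt \<phi> a x n) \<longlonglongrightarrow> Gam \<phi> a x"
  unfolding Rt_alt Gam_def
  by (intro tendsto_intros ext_tendsto[OF assms])
     (metis (no_types) Lim_same sum_exp_ge1 not_one_le_zero)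

lemma continuous_splice: "continuous_on UNIV (\<lambda>x. splice x i a p)"
  unfolding splice_def
  apply (intro continuous_on_coordinatewise_then_product)
  subgoal for k by (cases "int k - int p = i") auto
  done

lemma continuous_Dsum:
  assumes "continuous_on UNIV \<phi>"
  shows "continuous_on UNIV (Dsum \<phi> a b n)"
  unfolding Dsum_def
  by (intro continuous_intros continuous_on_compose2[OF assms continuous_splice]) auto

lemma continuous_Lim:
  assumes "continuous_on UNIV \<phi>" "extensible \<phi>"
  shows "continuous_on UNIV (Lim \<phi> a b)"
  by (rule uniform_limit_theorem[OF _ ext_unif[OF assms(2)]])
     (auto intro!: always_eventually continuous_Dsum[OF assms(1)])

lemma continuous_Gam:
  assumes "continuous_on UNIV \<phi>" "extensible \<phi>"
  shows "continuous_on UNIV (Gam \<phi> a)"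
  unfolding Gam_def
  apply (intro continuous_intros continuous_Lim[OF assms])
  by (metis (no_types) Lim_same sum_exp_ge1 not_one_le_zero)

lemma Gam_pos: "0 < Gam \<phi> a x"
  unfolding Gam_def by (auto intro!: sum_pos)

lemma Gam_le1: "Gam \<phi> a x \<le> 1"
  unfolding Gam_def using sum_exp_ge1[of "\<lambda>b. Lim \<phi> a b x" a] by simp

lemma gamma0: 
  assumes "extensible \<phi>"
  shows "gamma \<phi> 0 a x = Gam \<phi> a x"
proof -
  have "gamma \<phi> 0 a x = lim (\<lambda>p. Rt \<phi> a x p)"
    unfolding gamma_def Rt_def by (simp add: nat_add_distrib)
  then show ?thesis using Rt_tendsto[OF assms] by (simp add: limI)
qed

lemma gamma_shift:
  assumes "extensible \<phi>"
  shows "gamma \<phi> i a x = Gam \<phi> a (\<lambda>j. x (j + i))"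
proof -
  define y where "y = (\<lambda>j. x (j + i))"
  have eq: "exp (Sn \<phi> (nat (i + int p + 1)) (splice x i a p)) /
      (\<Sum>b\<in>UNIV. exp (Sn \<phi> (nat (i + int p + 1)) (splice x i b p))) = Rt \<phi> a y (nat (int p + i))"
    if "int p + i \<ge> 0" for p
  proof -
    have n1: "nat (i + int p + 1) = nat (int p + i) + 1" using that by simp
    have sp: "splice x i c p = splice y 0 c (nat (int p + i))" for c
      using that by (auto simp: splice_def y_def fun_eq_iff)
    show ?thesis unfolding Rt_def n1 sp ..
  qed
  have fl: "filterlim (\<lambda>p::nat. nat (int p + i)) sequentially sequentially"
    unfolding filterlim_at_top
  proof
    fix Z :: nat
    show "\<forall>\<^sub>F p in sequentially. Z \<le> nat (int p + i)"
      using eventually_ge_at_top[of "nat (int Z - i)"] by (rule eventually_mono) auto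
  qed
  have "(\<lambda>p. Rt \<phi> a y (nat (int p + i))) \<longlonglongrightarrow> Gam \<phi> a y"
    by (rule filterlim_compose[OF Rt_tendsto[OF assms] fl])
  moreover have "\<forall>\<^sub>F p in sequentially. Rt \<phi> a y (nat (int p + i)) =
      exp (Sn \<phi> (nat (i + int p + 1)) (splice x i a p)) /
      (\<Sum>b\<in>UNIV. exp (Sn \<phi> (nat (i + int p + 1)) (splice x i b p)))"
    using eventually_ge_at_top[of "nat (- i)"] by (rule eventually_mono) (auto simp: eq)
  ultimately have "(\<lambda>p. exp (Sn \<phi> (nat (i + int p + 1)) (splice x i a p)) /
      (\<Sum>b\<in>UNIV. exp (Sn \<phi> (nat (i + int p + 1)) (splice x i b p)))) \<longlonglongrightarrow> Gam \<phi> a y"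
    by (rule Lim_transform_eventually)
  then show ?thesis unfolding gamma_def y_def by (simp add: limI)
qed



definition G :: "((nat \<Rightarrow> 'e::finite) \<Rightarrow> real) \<Rightarrow> nat \<Rightarrow> 'e \<Rightarrow> (nat \<Rightarrow> 'e) \<Rightarrow> real" where
  "G \<phi> m a v = exp (Sn \<phi> (m + 1) (v(m := a))) / (\<Sum>b\<in>UNIV. exp (Sn \<phi> (m + 1) (v(m := b))))"

definition mix :: "nat \<Rightarrow> (nat \<Rightarrow> 'e) \<Rightarrow> (nat \<Rightarrow> 'e) \<Rightarrow> (nat \<Rightarrow> 'e)" where
  "mix N w v = (\<lambda>k. if k < N then w k else v k)"

lemma continuous_Sn:
  assumes "continuous_on UNIV \<phi>"
  shows "continuous_on UNIV (Sn \<phi> n)"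
proof -
  have c: "continuous_on UNIV (\<lambda>z::nat \<Rightarrow> 'a. (\<lambda>j. z (j + k)))" for k
    by (intro continuous_on_coordinatewise_then_product) simp
  show ?thesis unfolding Sn_def
    by (intro continuous_intros continuous_on_compose2[OF assms c]) auto
qed

lemma continuous_upd: "continuous_on UNIV (\<lambda>v::nat \<Rightarrow> 'e::topological_space. v(m := b))"
  apply (intro continuous_on_coordinatewise_then_product)
  subgoal for k by (cases "k = m") auto
  done

lemma sum_exp_pos: "0 < (\<Sum>b\<in>(UNIV::'e::finite set). exp (f b :: real))"
  by (rule sum_pos) auto

lemma continuous_G:
  assumes "continuous_on UNIV \<phi>"
  shows "continuous_on UNIV (G \<phi> m a)"
  unfolding G_def
  by (intro continuous_intros continuous_on_compose2[OF continuous_Sn[OF assms] continuous_upd])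
     (auto simp: sum_exp_pos[THEN less_imp_neq, symmetric])

lemma G_pos: "0 < G \<phi> m a v"
  unfolding G_def using sum_exp_pos by (auto intro!: divide_pos_pos)

lemma G_le1: "G \<phi> m a v \<le> 1"
proof -
  have "exp (Sn \<phi> (m + 1) (v(m := a))) \<le> (\<Sum>b\<in>UNIV. exp (Sn \<phi> (m + 1) (v(m := b))))"
    by (rule member_le_sum) auto
  moreover have "0 < (\<Sum>b\<in>UNIV. exp (Sn \<phi> (m + 1) (v(m := b))))" by (rule sum_exp_pos)
  ultimately show ?thesis unfolding G_def by (simp add: divide_le_eq_1)
qed

lemma cyl_borel:
  fixes S :: "('i::countable \<times> 'e::{finite,discrete_topology}) set"
  assumes "finite S"
  shows "cyl S \<in> sets borel"
  unfolding sets_borel_fun using assms by (rule cyl_in_sigma) auto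

lemma coord_borel: "{y :: 'i::countable \<Rightarrow> 'e::{finite,discrete_topology}. y j = b} \<in> sets borel"
  unfolding sets_borel_fun by (intro sigma_sets.Basic) (auto simp: coordgen_def)

lemma closed_coord: "closed {y :: 'i \<Rightarrow> 'e::discrete_topology. y j = b}"
proof -
  have "open ((\<lambda>y::'i\<Rightarrow>'e. y j) -` (-{b}))"
    using open_vimage[of "-{b}" "\<lambda>y::'i\<Rightarrow>'e. y j"] Topological_Spaces.open_discrete[of "-{b}"] by simp
  moreover have "(\<lambda>y::'i\<Rightarrow>'e. y j) -` (-{b}) = - {y. y j = b}" by auto
  ultimately show ?thesis by (simp add: closed_def)
qed

lemma cyl_Inter: "cyl S = (\<Inter>p\<in>S. {y. y (fst p) = snd p})"
  unfolding cyl_def by (auto; fastforce)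

lemma open_cyl: "finite S \<Longrightarrow> open (cyl (S :: ('i \<times> 'e::discrete_topology) set))"
  unfolding cyl_Inter by (intro open_INT) (auto intro: open_coord)

lemma closed_cyl: "closed (cyl (S :: ('i \<times> 'e::discrete_topology) set))"
  unfolding cyl_Inter by (intro closed_INT) (auto intro: closed_coord)

lemma continuous_indicator_clopen:
  assumes "open A" "closed A"
  shows "continuous_on UNIV (indicator A :: _ \<Rightarrow> real)"
  unfolding continuous_on_open_vimage[OF open_UNIV]
proof (intro allI impI)
  fix B :: "real set" assume "open B"
  have "indicator A -` B \<inter> UNIV = (if 1 \<in> B then A else {}) \<union> (if 0 \<in> B then -A else {})"
    by (auto simp: indicator_def of_bool_def split: if_splits)
  then show "open (indicator A -` B \<inter> UNIV)"
    using assms by (auto simp: closed_def)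
qed

lemma continuous_ind_cyl:
  "finite S \<Longrightarrow> continuous_on UNIV (indicator (cyl (S :: ('i \<times> 'e::discrete_topology) set)) :: _ \<Rightarrow> real)"
  by (intro continuous_indicator_clopen open_cyl closed_cyl)

lemma continuous_ind_coord:
  "continuous_on UNIV (indicator {y :: 'i \<Rightarrow> 'e::discrete_topology. y j = b} :: _ \<Rightarrow> real)"
  by (intro continuous_indicator_clopen open_coord closed_coord)

lemma swap_identity:
  fixes E c :: "(nat \<Rightarrow> 'e::finite) \<Rightarrow> real"
  assumes W: "finite W" "\<And>w b. w \<in> W \<Longrightarrow> w(m := b) \<in> W"
    and c: "\<And>w b. w \<in> W \<Longrightarrow> c (w(m := b)) = c w"
    and E: "\<And>w. E w > 0"
  shows "(\<Sum>w\<in>W. c w * (if w m = a then 1 else 0) * E w)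
       = (\<Sum>w\<in>W. c w * (E (w(m := a)) / (\<Sum>b\<in>UNIV. E (w(m := b)))) * E w)"
proof -
  define T where "T w = (\<Sum>b\<in>UNIV. E (w(m := b)))" for w
  have Tpos: "T w > 0" for w unfolding T_def using E by (intro sum_pos) auto
  have Tupd: "T (w(m := b)) = T w" for w b unfolding T_def by simp
  define F where "F p = c (fst p) * (if fst p m = a then 1 else 0) * E (fst p) * E ((fst p)(m := snd p)) / T (fst p)" for p
  have "(\<Sum>w\<in>W. c w * (if w m = a then 1 else 0) * E w) = (\<Sum>w\<in>W. \<Sum>b\<in>UNIV. F (w, b))"
  proof (rule sum.cong[OF refl])
    fix w assume "w \<in> W"
    have "(\<Sum>b\<in>UNIV. F (w, b)) = c w * (if w m = a then 1 else 0) * E w * (\<Sum>b\<in>UNIV. E (w(m := b))) / T w"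
      unfolding F_def by (simp add: sum_distrib_left sum_divide_distrib)
    also have "\<dots> = c w * (if w m = a then 1 else 0) * E w"
      using Tpos[of w] unfolding T_def by simp
    finally show "c w * (if w m = a then 1 else 0) * E w = (\<Sum>b\<in>UNIV. F (w, b))" by simp
  qed
  also have "\<dots> = (\<Sum>p\<in>W \<times> UNIV. F p)" by (simp add: sum.cartesian_product)
  also have "\<dots> = (\<Sum>p\<in>W \<times> UNIV. F ((fst p)(m := snd p), fst p m))"
    by (rule sum.reindex_bij_witness[where i = "\<lambda>p. ((fst p)(m := snd p), fst p m)"
          and j = "\<lambda>p. ((fst p)(m := snd p), fst p m)"]) (auto simp: W)
  also have "\<dots> = (\<Sum>w\<in>W. \<Sum>b\<in>UNIV. F (w(m := b), w m))" by (simp add: sum.cartesian_product split_beta)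
  also have "\<dots> = (\<Sum>w\<in>W. c w * (E (w(m := a)) / T w) * E w)"
  proof (rule sum.cong[OF refl])
    fix w assume "w \<in> W"
    have "F (w(m := b), w m) = (if b = a then c w * E (w(m := a)) * E w / T w else 0)" for b
      unfolding F_def using c[OF \<open>w \<in> W\<close>] by (simp add: Tupd)
    then show "(\<Sum>b\<in>UNIV. F (w(m := b), w m)) = c w * (E (w(m := a)) / T w) * E w"
      by simp
  qed
  finally show ?thesis unfolding T_def .
qed



definition pw :: "((nat \<Rightarrow> 'e::finite) \<Rightarrow> real) \<Rightarrow> nat \<Rightarrow> (nat \<Rightarrow> 'e) \<Rightarrow> (nat \<Rightarrow> 'e) \<Rightarrow> real" where
  "pw \<phi> N w v = exp (Sn \<phi> N (mix N w v)) / (\<Sum>b\<in>Pi\<^sub>E {..<N} (\<lambda>_. UNIV). exp (Sn \<phi> N (mix N b v)))"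

lemma continuous_mix: "continuous_on UNIV (mix N w :: (nat \<Rightarrow> 'e::topological_space) \<Rightarrow> _)"
  unfolding mix_def
  apply (intro continuous_on_coordinatewise_then_product)
  subgoal for k by (cases "k < N") auto
  done

lemma measurable_mix:
  "mix N w \<in> measurable (coord_algebra {N..}) (borel :: (nat \<Rightarrow> 'e::{finite,discrete_topology}) measure)"
  apply (rule measurable_from_coord)
  subgoal for j by (cases "j < N") (auto simp: mix_def)
  done

lemma restrict_in_W: "restrict v {..<N} \<in> Pi\<^sub>E {..<N} (\<lambda>_. UNIV)"
  by auto

lemma sum_pos_W:
  fixes f :: "(nat \<Rightarrow> 'e::finite) \<Rightarrow> real"
  shows "0 < (\<Sum>b\<in>Pi\<^sub>E {..<N} (\<lambda>_. UNIV). exp (f b))"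
  by (rule sum_pos) (auto simp: finite_PiE)

lemma pw_nonneg: "0 \<le> pw \<phi> N w v"
  unfolding pw_def using sum_pos_W by (auto intro!: divide_nonneg_pos)

lemma pw_le1: 
  assumes "w \<in> Pi\<^sub>E {..<N} (\<lambda>_. UNIV)"
  shows "pw \<phi> N w v \<le> 1"
proof -
  have "exp (Sn \<phi> N (mix N w v)) \<le> (\<Sum>b\<in>Pi\<^sub>E {..<N} (\<lambda>_. UNIV). exp (Sn \<phi> N (mix N b v)))"
    by (rule member_le_sum) (auto simp: finite_PiE assms)
  moreover have "0 < (\<Sum>b\<in>Pi\<^sub>E {..<N} (\<lambda>_. UNIV). exp (Sn \<phi> N (mix N b v)))" by (rule sum_pos_W)
  ultimately show ?thesis unfolding pw_def by (simp add: divide_le_eq_1)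
qed

lemma continuous_pw:
  assumes "continuous_on UNIV \<phi>"
  shows "continuous_on UNIV (pw \<phi> N w)"
  unfolding pw_def
  by (intro continuous_intros continuous_on_compose2[OF continuous_Sn[OF assms] continuous_mix])
     (auto simp: sum_pos_W[THEN less_imp_neq, symmetric])

lemma decomp:
  fixes H :: "(nat \<Rightarrow> 'e::finite) \<Rightarrow> real" and v :: "nat \<Rightarrow> 'e"
  shows "H v = (\<Sum>w\<in>Pi\<^sub>E {..<N} (\<lambda>_. UNIV). indicator {y. \<forall>k<N. y k = w k} v * H (mix N w v))"
proof -
  let ?W = "Pi\<^sub>E {..<N} (\<lambda>_. UNIV) :: (nat \<Rightarrow> 'e) set"
  define w0 where "w0 = restrict v {..<N}"
  have w0W: "w0 \<in> ?W" by (auto simp: w0_def)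
  have "(\<Sum>w\<in>?W. indicator {y. \<forall>k<N. y k = w k} v * H (mix N w v))
      = (\<Sum>w\<in>?W. if w = w0 then H v else 0)"
  proof (rule sum.cong[OF refl])
    fix w assume w: "w \<in> ?W"
    show "indicator {y. \<forall>k<N. y k = w k} v * H (mix N w v) = (if w = w0 then H v else 0)"
    proof (cases "w = w0")
      case True
      have "mix N w v = v" by (auto simp: True w0_def mix_def)
      then show ?thesis using True by (simp add: w0_def indicator_def)
    next
      case False
      have "\<not> (\<forall>k<N. v k = w k)"
      proof
        assume "\<forall>k<N. v k = w k"
        then have "w = w0" using w by (auto simp: w0_def fun_eq_iff PiE_iff extensional_def)
        then show False using False by simp
      qed
      then show ?thesis using False by (simp add: indicator_def)
    qed
  qed
  also have "\<dots> = H v"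
  proof -
    have fin: "finite ?W" by (rule finite_PiE) auto
    show ?thesis using sum.delta[OF fin, of w0 "\<lambda>_. H v"] w0W by simp
  qed
  finally show ?thesis by simp
qed

lemma CE_decomp:
  fixes \<nu> :: "(nat \<Rightarrow> 'e::{finite,discrete_topology}) measure"
  assumes hg: "half_line_gibbs \<phi> \<nu>" and cont: "continuous_on UNIV \<phi>" and N: "N \<ge> 1"
    and Hm: "H \<in> borel_measurable borel" and Hb: "\<And>v. \<bar>H v\<bar> \<le> 1"
  shows "(\<integral>v. H v \<partial>\<nu>) = (\<integral>v. (\<Sum>w\<in>Pi\<^sub>E {..<N} (\<lambda>_. UNIV). H (mix N w v) * pw \<phi> N w v) \<partial>\<nu>)"
proof -
  let ?W = "Pi\<^sub>E {..<N} (\<lambda>_. UNIV) :: (nat \<Rightarrow> 'e) set"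
  let ?F = "coord_algebra {N..} :: (nat \<Rightarrow> 'e) measure"
  have ps: "prob_space \<nu>" and sb: "sets \<nu> = sets borel"
    and gibbs: "\<And>a. AE x in \<nu>.
        real_cond_exp \<nu> (coord_algebra {N..}) (indicator {y. \<forall>k<N. y k = a k}) x
        = exp (Sn \<phi> N (\<lambda>k. if k < N then a k else x k))
          / (\<Sum>b\<in>Pi\<^sub>E {..<N} (\<lambda>_. UNIV). exp (Sn \<phi> N (\<lambda>k. if k < N then b k else x k)))"
    using hg N unfolding half_line_gibbs_def by auto
  interpret P: prob_space \<nu> by (rule ps)
  have meas_eq: "measurable \<nu> = measurable borel" 
    by (intro ext measurable_cong_sets[OF sb refl])
  interpret S: sigma_finite_subalgebra \<nu> ?F
    by (rule coord_subalg[OF P.finite_measure_axioms sb])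
  have bnd_int: "integrable \<nu> f" if "f \<in> borel_measurable borel" "\<And>v. \<bar>f v\<bar> \<le> B" for f :: "_ \<Rightarrow> real" and B
    using that by (intro P.integrable_const_bound[of _ B]) (auto simp: meas_eq)
  have Hmix_F: "(\<lambda>v. H (mix N w v)) \<in> borel_measurable ?F" for w
    by (rule measurable_compose[OF measurable_mix Hm])
  have Hmix_B: "(\<lambda>v. H (mix N w v)) \<in> borel_measurable borel" for w
    by (rule measurable_compose[OF _ Hm]) 
       (rule borel_measurable_continuous_onI[OF continuous_mix])
  have Pw_sets: "{y. \<forall>k<N. y k = w k} \<in> sets (borel :: (nat \<Rightarrow> 'e) measure)" for w :: "nat \<Rightarrow> 'e"
  proof -
    have "{y. \<forall>k<N. y k = w k} = cyl ((\<lambda>k. (k, w k)) ` {..<N})" by (auto simp: cyl_def)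
    then show ?thesis using cyl_borel[of "(\<lambda>k. (k, w k)) ` {..<N}"] by auto
  qed
  have pw_meas: "pw \<phi> N w \<in> borel_measurable borel" for w
    by (rule borel_measurable_continuous_onI[OF continuous_pw[OF cont]])
  have indH_bound: "\<bar>H (mix N w v) * indicator P v\<bar> \<le> 1" for w v P
    using Hb[of "mix N w v"] by (simp add: abs_mult indicator_def)
  have indH_bound': "\<bar>indicator P v * H (mix N w v)\<bar> \<le> 1" for w v P
    using Hb[of "mix N w v"] by (simp add: abs_mult indicator_def)
  have step: "(\<integral>v. indicator {y. \<forall>k<N. y k = w k} v * H (mix N w v) \<partial>\<nu>)
      = (\<integral>v. H (mix N w v) * pw \<phi> N w v \<partial>\<nu>)" if w: "w \<in> ?W" for w
  proof -
    let ?g = "indicator {y. \<forall>k<N. y k = w k} :: _ \<Rightarrow> real"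
    have gm: "?g \<in> borel_measurable \<nu>" using Pw_sets[of w] sb by (simp add: meas_eq)
    have int: "integrable \<nu> (\<lambda>v. H (mix N w v) * ?g v)"
      by (rule bnd_int[OF _ indH_bound]) (intro borel_measurable_times Hmix_B borel_measurable_indicator Pw_sets)
    have "(\<integral>v. H (mix N w v) * real_cond_exp \<nu> ?F ?g v \<partial>\<nu>) = (\<integral>v. H (mix N w v) * ?g v \<partial>\<nu>)"
      by (rule S.real_cond_exp_intg(2)[OF int Hmix_F gm])
    moreover have "(\<integral>v. H (mix N w v) * real_cond_exp \<nu> ?F ?g v \<partial>\<nu>) = (\<integral>v. H (mix N w v) * pw \<phi> N w v \<partial>\<nu>)"
    proof (rule integral_cong_AE)
      show "(\<lambda>v. H (mix N w v) * real_cond_exp \<nu> ?F ?g v) \<in> borel_measurable \<nu>"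
        using Hmix_B by (auto simp: meas_eq[symmetric] intro!: borel_measurable_times)
      show "(\<lambda>v. H (mix N w v) * pw \<phi> N w v) \<in> borel_measurable \<nu>"
        using Hmix_B pw_meas by (auto simp: meas_eq intro!: borel_measurable_times)
      show "AE v in \<nu>. H (mix N w v) * real_cond_exp \<nu> ?F ?g v = H (mix N w v) * pw \<phi> N w v"
        using gibbs[of w] by (rule AE_mp) (auto simp: pw_def mix_def)
    qed
    ultimately show ?thesis by (simp add: mult.commute)
  qed
  have "(\<integral>v. H v \<partial>\<nu>) = (\<integral>v. (\<Sum>w\<in>?W. indicator {y. \<forall>k<N. y k = w k} v * H (mix N w v)) \<partial>\<nu>)"
    by (rule Bochner_Integration.integral_cong[OF refl]) (rule decomp)
  also have "\<dots> = (\<Sum>w\<in>?W. (\<integral>v. indicator {y. \<forall>k<N. y k = w k} v * H (mix N w v) \<partial>\<nu>))"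
    by (rule Bochner_Integration.integral_sum, rule bnd_int[OF _ indH_bound'])
       (intro borel_measurable_times Hmix_B borel_measurable_indicator Pw_sets)
  also have "\<dots> = (\<Sum>w\<in>?W. (\<integral>v. H (mix N w v) * pw \<phi> N w v \<partial>\<nu>))"
    by (rule sum.cong[OF refl step])
  also have "\<dots> = (\<integral>v. (\<Sum>w\<in>?W. H (mix N w v) * pw \<phi> N w v) \<partial>\<nu>)"
  proof (rule Bochner_Integration.integral_sum[symmetric])
    fix w assume "w \<in> ?W"
    show "integrable \<nu> (\<lambda>v. H (mix N w v) * pw \<phi> N w v)"
    proof (rule bnd_int)
      show "(\<lambda>v. H (mix N w v) * pw \<phi> N w v) \<in> borel_measurable borel"
        by (intro borel_measurable_times Hmix_B pw_meas)
      fix v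
      have "\<bar>H (mix N w v)\<bar> * \<bar>pw \<phi> N w v\<bar> \<le> 1 * 1"
        using Hb[of "mix N w v"] pw_nonneg[of \<phi> N w v] pw_le1[OF \<open>w \<in> ?W\<close>, of \<phi> v]
        by (intro mult_mono) auto
      then show "\<bar>H (mix N w v) * pw \<phi> N w v\<bar> \<le> 1" by (simp add: abs_mult)
    qed
  qed
  finally show ?thesis .
qed



lemma cyl_upd:
  assumes "m \<notin> fst ` S"
  shows "(y(m := b) \<in> cyl S) = (y \<in> cyl S)"
  using assms unfolding cyl_def by (auto; force)

lemma mix_upd: "m < N \<Longrightarrow> mix N (w(m := b)) v = (mix N w v)(m := b)"
  by (auto simp: mix_def fun_eq_iff)

lemma nu_site:
  fixes \<nu> :: "(nat \<Rightarrow> 'e::{finite,discrete_topology}) measure" and S :: "(nat \<times> 'e) set"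
  assumes hg: "half_line_gibbs \<phi> \<nu>" and cont: "continuous_on UNIV \<phi>"
    and S: "finite S" "m \<notin> fst ` S"
  shows "(\<integral>v. indicator (cyl S) v * indicator {v. v m = a} v \<partial>\<nu>)
       = (\<integral>v. indicator (cyl S) v * G \<phi> m a v \<partial>\<nu>)"
proof -
  define N where "N = m + 1"
  have N1: "N \<ge> 1" and mN: "m < N" by (auto simp: N_def)
  let ?W = "Pi\<^sub>E {..<N} (\<lambda>_. UNIV) :: (nat \<Rightarrow> 'e) set"
  define H1 where "H1 v = (indicator (cyl S) v * indicator {v. v m = a} v :: real)" for v :: "nat \<Rightarrow> 'e"
  define H2 where "H2 v = indicator (cyl S) v * G \<phi> m a v" for v :: "nat \<Rightarrow> 'e"
  have H1m: "H1 \<in> borel_measurable borel" unfolding H1_def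
    by (intro borel_measurable_times borel_measurable_indicator cyl_borel S coord_borel)
  have H2m: "H2 \<in> borel_measurable borel" unfolding H2_def
    by (intro borel_measurable_times borel_measurable_indicator cyl_borel S
        borel_measurable_continuous_onI continuous_G cont)
  have H1b: "\<bar>H1 v\<bar> \<le> 1" for v unfolding H1_def by (simp add: abs_mult indicator_def)
  have H2b: "\<bar>H2 v\<bar> \<le> 1" for v 
    unfolding H2_def using G_pos[of \<phi> m a v] G_le1[of \<phi> m a v] by (simp add: abs_mult indicator_def)
  have I1: "(\<integral>v. H1 v \<partial>\<nu>) = (\<integral>v. (\<Sum>w\<in>?W. H1 (mix N w v) * pw \<phi> N w v) \<partial>\<nu>)"
    by (rule CE_decomp[OF hg cont N1 H1m H1b])
  have I2: "(\<integral>v. H2 v \<partial>\<nu>) = (\<integral>v. (\<Sum>w\<in>?W. H2 (mix N w v) * pw \<phi> N w v) \<partial>\<nu>)"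
    by (rule CE_decomp[OF hg cont N1 H2m H2b])
  have pt: "(\<Sum>w\<in>?W. H1 (mix N w v) * pw \<phi> N w v) = (\<Sum>w\<in>?W. H2 (mix N w v) * pw \<phi> N w v)" for v
  proof -
    define E where "E w = exp (Sn \<phi> N (mix N w v))" for w
    define Z where "Z = (\<Sum>b\<in>?W. E b)"
    define c where "c w = (indicator (cyl S) (mix N w v) :: real)" for w :: "nat \<Rightarrow> 'e"
    have pwE: "pw \<phi> N w v = E w / Z" for w unfolding pw_def E_def Z_def ..
    have h1: "H1 (mix N w v) = c w * (if w m = a then 1 else 0)" for w
      unfolding H1_def c_def using mN by (simp add: mix_def indicator_def)
    have h2: "H2 (mix N w v) = c w * (E (w(m := a)) / (\<Sum>b\<in>UNIV. E (w(m := b))))" for w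
      unfolding H2_def c_def G_def E_def using mN by (simp add: mix_upd N_def)
    have fin: "finite ?W" by (rule finite_PiE) auto
    have sw: "(\<Sum>w\<in>?W. c w * (if w m = a then 1 else 0) * E w)
       = (\<Sum>w\<in>?W. c w * (E (w(m := a)) / (\<Sum>b\<in>UNIV. E (w(m := b)))) * E w)"
    proof (rule swap_identity[OF fin])
      fix w b assume "w \<in> ?W"
      then show "w(m := b) \<in> ?W" using mN by (auto simp: PiE_iff extensional_def)
      show "c (w(m := b)) = c w" unfolding c_def mix_upd[OF mN] indicator_def
        using cyl_upd[OF S(2)] by simp
    next
      fix w show "E w > 0" by (simp add: E_def)
    qed
    have e1: "(\<Sum>w\<in>?W. H1 (mix N w v) * pw \<phi> N w v) = (\<Sum>w\<in>?W. c w * (if w m = a then 1 else 0) * E w) / Z"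
      unfolding h1 pwE sum_divide_distrib by (simp add: mult.assoc)
    have e2: "(\<Sum>w\<in>?W. H2 (mix N w v) * pw \<phi> N w v) = (\<Sum>w\<in>?W. c w * (E (w(m := a)) / (\<Sum>b\<in>UNIV. E (w(m := b)))) * E w) / Z"
      unfolding h2 pwE sum_divide_distrib by (rule sum.cong[OF refl]) simp
    show ?thesis unfolding e1 e2 sw ..
  qed
  show ?thesis
    using I1 I2 pt by (simp add: H1_def[symmetric] H2_def[symmetric])
qed



lemma pps:
  assumes "prob_space M1" "prob_space M2"
  shows "pair_prob_space M1 M2"
  using assms by (simp add: pair_prob_space_def pair_sigma_finite_def prob_space_imp_sigma_finite)

lemma prod_int:
  fixes f :: "'a \<Rightarrow> real" and g :: "'b \<Rightarrow> real"
  assumes "prob_space M1" "prob_space M2"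
    and fm: "f \<in> borel_measurable M1" and gm: "g \<in> borel_measurable M2"
    and fb: "\<And>u. \<bar>f u\<bar> \<le> 1" and gb: "\<And>v. \<bar>g v\<bar> \<le> 1"
  shows "(\<integral>p. f (fst p) * g (snd p) \<partial>(M1 \<Otimes>\<^sub>M M2)) = (\<integral>u. f u \<partial>M1) * (\<integral>v. g v \<partial>M2)"
proof -
  interpret PP: pair_prob_space M1 M2 by (rule pps[OF assms(1,2)])
  have [measurable]: "f \<in> borel_measurable M1" "g \<in> borel_measurable M2" by (fact fm, fact gm)
  have int: "integrable (M1 \<Otimes>\<^sub>M M2) (\<lambda>(u, v). f u * g v)"
  proof (rule PP.P.integrable_const_bound[of _ 1])
    show "AE x in M1 \<Otimes>\<^sub>M M2. norm (case x of (u, v) \<Rightarrow> f u * g v) \<le> 1"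
    proof (rule AE_I2)
      fix x :: "'a \<times> 'b"
      obtain u v where x: "x = (u, v)" by (cases x)
      have "\<bar>f u\<bar> * \<bar>g v\<bar> \<le> 1 * 1" using fb[of u] gb[of v] by (intro mult_mono) auto
      then show "norm (case x of (u, v) \<Rightarrow> f u * g v) \<le> 1" by (simp add: x abs_mult)
    qed
  qed measurable
  have "(\<integral>p. f (fst p) * g (snd p) \<partial>(M1 \<Otimes>\<^sub>M M2)) = integral\<^sup>L (M1 \<Otimes>\<^sub>M M2) (\<lambda>(u, v). f u * g v)"
  proof -
    have eq: "(\<lambda>(u, v). f u * g v) = (\<lambda>p. f (fst p) * g (snd p))" by (auto simp: fun_eq_iff)
    show ?thesis by (simp only: eq)
  qed
  also have "\<dots> = (\<integral>u. (\<integral>v. f u * g v \<partial>M2) \<partial>M1)"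
    by (rule PP.integral_fst[OF int, symmetric])
  also have "\<dots> = (\<integral>u. f u * (\<integral>v. g v \<partial>M2) \<partial>M1)" by simp
  also have "\<dots> = (\<integral>u. f u \<partial>M1) * (\<integral>v. g v \<partial>M2)" by simp
  finally show ?thesis .
qed

lemma prob_rho: "prob_space (rho :: (nat \<Rightarrow> 'e::{finite,discrete_topology}) measure)"
  unfolding rho_def by (intro prob_space_PiM prob_space_measure_pmf)

lemma space_rho[simp]: "space (rho :: (nat \<Rightarrow> 'e::{finite,discrete_topology}) measure) = UNIV"
  unfolding rho_def by (simp add: space_PiM)

lemma coord_rho: "{u. u k = b} \<in> sets (rho :: (nat \<Rightarrow> 'e::{finite,discrete_topology}) measure)"
proof -
  have "(\<lambda>u. u k) \<in> measurable (rho :: (nat \<Rightarrow> 'e) measure) (measure_pmf (pmf_of_set UNIV))"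
    unfolding rho_def by (rule measurable_component_singleton) simp
  then have "(\<lambda>u. u k) -` {b} \<inter> space rho \<in> sets (rho :: (nat \<Rightarrow> 'e) measure)"
    by (rule measurable_sets) simp
  moreover have "(\<lambda>u. u k) -` {b} \<inter> space rho = {u :: nat \<Rightarrow> 'e. u k = b}" by auto
  ultimately show ?thesis by simp
qed

lemma cyl_rho:
  fixes S :: "(nat \<times> 'e::{finite,discrete_topology}) set"
  assumes "finite S"
  shows "cyl S \<in> sets (rho :: (nat \<Rightarrow> 'e) measure)"
  using assms
proof (induction S rule: finite_induct)
  case empty
  have "space rho \<in> sets (rho :: (nat \<Rightarrow> 'e) measure)" by (rule sets.top)
  then show ?case by (simp add: cyl_def)
next
  case (insert p S)
  obtain j b where p: "p = (j, b)" by (cases p)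
  have "cyl (insert p S) = {y. y j = b} \<inter> cyl S" by (auto simp: cyl_def p)
  then show ?case using insert coord_rho by auto
qed

lemma measurable_glue:
  assumes sb: "sets \<nu> = sets (borel :: (nat \<Rightarrow> 'e::{finite,discrete_topology}) measure)"
  shows "glue \<in> measurable (rho \<Otimes>\<^sub>M \<nu>) (borel :: (int \<Rightarrow> 'e) measure)"
proof (rule measurable_to_fun)
  fix j :: int and b :: 'e
  have sp: "space (rho \<Otimes>\<^sub>M \<nu>) = UNIV"
    using sb by (simp add: space_pair_measure sets_eq_imp_space_eq[OF sb])
  show "{x \<in> space (rho \<Otimes>\<^sub>M \<nu>). glue x j = b} \<in> sets (rho \<Otimes>\<^sub>M \<nu>)"
  proof (cases "j < 0")
    case True
    then have "{x \<in> space (rho \<Otimes>\<^sub>M \<nu>). glue x j = b} = {u. u (nat (- j - 1)) = b} \<times> space \<nu>"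
      using sp by (auto simp: glue_def space_pair_measure)
    then show ?thesis by (simp add: pair_measureI coord_rho)
  next
    case False
    then have eq: "{x \<in> space (rho \<Otimes>\<^sub>M \<nu>). glue x j = b} = space rho \<times> {v. v (nat j) = b}"
      using sp by (auto simp: glue_def space_pair_measure)
    have "{v. v (nat j) = b} \<in> sets \<nu>" using sb coord_borel by simp
    then show ?thesis unfolding eq by (intro pair_measureI sets.top)
  qed
qed

lemma measurable_shift:
  "(\<lambda>x i. x (i + c)) \<in> measurable (borel :: (int \<Rightarrow> 'e::{finite,discrete_topology}) measure) borel"
  by (rule measurable_to_fun) (simp add: coord_borel)



lemma splice_glue:
  assumes "int m = int n + i"
  shows "splice (\<lambda>j. glue (u, v) (j + i + int n)) 0 b m = v(m := b)"
  using assms by (auto simp: splice_def glue_def fun_eq_iff)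

lemma mun_integral:
  fixes \<nu> :: "(nat \<Rightarrow> 'e::{finite,discrete_topology}) measure" and f :: "(int \<Rightarrow> 'e) \<Rightarrow> real"
  assumes sb: "sets \<nu> = sets borel" and fm: "f \<in> borel_measurable borel"
  shows "(\<integral>x. f x \<partial>(mun \<nu> n)) = (\<integral>p. f (\<lambda>j. glue p (j + int n)) \<partial>(rho \<Otimes>\<^sub>M \<nu>))"
proof -
  have sh: "(\<lambda>x i. x (i + int n)) \<in> measurable (mu0 \<nu>) (borel :: (int \<Rightarrow> 'e) measure)"
    using measurable_shift[of "int n"] by (simp add: mu0_def measurable_cong_sets[OF sets_distr refl])
  have "(\<integral>x. f x \<partial>(mun \<nu> n)) = (\<integral>x. f (\<lambda>i. x (i + int n)) \<partial>(mu0 \<nu>))"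
    unfolding mun_def by (rule integral_distr[OF sh fm])
  also have "\<dots> = (\<integral>p. f (\<lambda>j. glue p (j + int n)) \<partial>(rho \<Otimes>\<^sub>M \<nu>))"
    unfolding mu0_def
    by (rule integral_distr[OF measurable_glue[OF sb]])
       (rule measurable_compose[OF measurable_shift fm])
  finally show ?thesis .
qed

lemma mun_site:
  fixes \<nu> :: "(nat \<Rightarrow> 'e::{finite,discrete_topology}) measure" and S :: "(int \<times> 'e) set"
  assumes hg: "half_line_gibbs \<phi> \<nu>" and cont: "continuous_on UNIV \<phi>"
    and S: "finite S" "i \<notin> fst ` S" and ni: "0 \<le> int n + i"
  shows "(\<integral>x. indicator (cyl S) x * indicator {x. x i = a} x \<partial>(mun \<nu> n))
       = (\<integral>x. indicator (cyl S) x * Rt \<phi> a (\<lambda>j. x (j + i)) (nat (int n + i)) \<partial>(mun \<nu> n))"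
proof -
  define m where "m = nat (int n + i)"
  have mi: "int m = int n + i" using ni by (simp add: m_def)
  have ps: "prob_space \<nu>" and sb: "sets \<nu> = sets borel" using hg unfolding half_line_gibbs_def by auto
  define Sm where "Sm = (\<lambda>p. (nat (- (fst p + int n) - 1), snd p)) ` {p\<in>S. fst p + int n < 0}"
  define Sp where "Sp = (\<lambda>p. (nat (fst p + int n), snd p)) ` {p\<in>S. fst p + int n \<ge> 0}"
  have Smf: "finite Sm" "finite Sp" using S(1) by (auto simp: Sm_def Sp_def)
  have mSp: "m \<notin> fst ` Sp"
  proof
    assume "m \<in> fst ` Sp"
    then obtain j b where jb: "(j, b) \<in> S" "j + int n \<ge> 0" "nat (j + int n) = m"
      by (auto simp: Sp_def)
    then have "j = i" using mi by linarith
    then show False using jb(1) S(2) by force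
  qed
  have cylX: "((\<lambda>j. glue (u, v) (j + int n)) \<in> cyl S) = (u \<in> cyl Sm \<and> v \<in> cyl Sp)" for u v
  proof
    assume H: "(\<lambda>j. glue (u, v) (j + int n)) \<in> cyl S"
    have "\<forall>(j, b)\<in>S. glue (u, v) (j + int n) = b" using H by (auto simp: cyl_def)
    then show "u \<in> cyl Sm \<and> v \<in> cyl Sp"
      by (auto simp: cyl_def Sm_def Sp_def glue_def split: if_splits)
  next
    assume H: "u \<in> cyl Sm \<and> v \<in> cyl Sp"
    show "(\<lambda>j. glue (u, v) (j + int n)) \<in> cyl S"
      unfolding cyl_def
    proof (safe)
      fix j b assume jb: "(j, b) \<in> S"
      show "glue (u, v) (j + int n) = b"
      proof (cases "j + int n < 0")
        case True
        then have "(nat (- (j + int n) - 1), b) \<in> Sm" using jb unfolding Sm_def by force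
        then show ?thesis using H True by (auto simp: cyl_def glue_def)
      next
        case False
        then have "(nat (j + int n), b) \<in> Sp" using jb unfolding Sp_def by force
        then show ?thesis using H False by (auto simp: cyl_def glue_def)
      qed
    qed
  qed
  have Xi: "glue (u, v) (i + int n) = v m" for u v using mi ni by (simp add: glue_def m_def add.commute)
  have XR: "Rt \<phi> a (\<lambda>j. glue (u, v) (j + i + int n)) m = G \<phi> m a v" for u v
    unfolding Rt_def G_def splice_glue[OF mi] ..
  have f1m: "(\<lambda>x. indicator (cyl S) x * indicator {x. x i = a} x :: real) \<in> borel_measurable borel"
    by (intro borel_measurable_times borel_measurable_indicator cyl_borel S coord_borel)
  have Rcont: "continuous_on UNIV (\<lambda>x :: int \<Rightarrow> 'e. Rt \<phi> a (\<lambda>j. x (j + i)) m)"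
  proof -
    have c1: "continuous_on UNIV (\<lambda>x :: int \<Rightarrow> 'e. (\<lambda>j. x (j + i)))"
      by (intro continuous_on_coordinatewise_then_product) simp
    have c2: "continuous_on UNIV (\<lambda>y :: int \<Rightarrow> 'e. Rt \<phi> a y m)"
      unfolding Rt_def
      by (intro continuous_intros continuous_on_compose2[OF continuous_Sn[OF cont] continuous_splice])
         (auto simp: sum_exp_pos[THEN less_imp_neq, symmetric])
    show ?thesis by (rule continuous_on_compose2[OF c2 c1]) auto
  qed
  have f2m: "(\<lambda>x. indicator (cyl S) x * Rt \<phi> a (\<lambda>j. x (j + i)) m :: real) \<in> borel_measurable borel"
    by (intro borel_measurable_times borel_measurable_indicator cyl_borel S
        borel_measurable_continuous_onI Rcont)
  have "(\<integral>x. indicator (cyl S) x * indicator {x. x i = a} x \<partial>(mun \<nu> n))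
      = (\<integral>p. (indicator (cyl S) (\<lambda>j. glue p (j + int n)) :: real) * indicator {x. x i = a} (\<lambda>j. glue p (j + int n)) \<partial>(rho \<Otimes>\<^sub>M \<nu>))"
    using mun_integral[OF sb f1m, of n] by simp
  also have "\<dots> = (\<integral>p. indicator (cyl Sm) (fst p) * (indicator (cyl Sp) (snd p) * indicator {v. v m = a} (snd p)) \<partial>(rho \<Otimes>\<^sub>M \<nu>))"
    by (rule Bochner_Integration.integral_cong[OF refl])
       (auto simp: indicator_def cylX Xi)
  also have "\<dots> = (\<integral>u. indicator (cyl Sm) u \<partial>rho) * (\<integral>v. indicator (cyl Sp) v * indicator {v. v m = a} v \<partial>\<nu>)"
  proof (rule prod_int[OF prob_rho ps])
    show "indicator (cyl Sm) \<in> borel_measurable rho" by (intro borel_measurable_indicator cyl_rho Smf)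
    show "(\<lambda>v. indicator (cyl Sp) v * indicator {v. v m = a} v :: real) \<in> borel_measurable \<nu>"
      unfolding measurable_cong_sets[OF sb refl]
      by (intro borel_measurable_times borel_measurable_indicator cyl_borel Smf coord_borel)
    show "\<bar>indicator (cyl Sm) u\<bar> \<le> (1::real)" for u by (simp add: indicator_def)
    show "\<bar>indicator (cyl Sp) v * indicator {v. v m = a} v\<bar> \<le> (1::real)" for v
      by (simp add: abs_mult indicator_def)
  qed
  also have "(\<integral>v. indicator (cyl Sp) v * indicator {v. v m = a} v \<partial>\<nu>) = (\<integral>v. indicator (cyl Sp) v * G \<phi> m a v \<partial>\<nu>)"
    by (rule nu_site[OF hg cont Smf(2) mSp])
  also have "(\<integral>u. indicator (cyl Sm) u \<partial>rho) * (\<integral>v. indicator (cyl Sp) v * G \<phi> m a v \<partial>\<nu>)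
      = (\<integral>p. indicator (cyl Sm) (fst p) * (indicator (cyl Sp) (snd p) * G \<phi> m a (snd p)) \<partial>(rho \<Otimes>\<^sub>M \<nu>))"
  proof (rule prod_int[OF prob_rho ps, symmetric])
    show "indicator (cyl Sm) \<in> borel_measurable rho" by (intro borel_measurable_indicator cyl_rho Smf)
    show "(\<lambda>v. indicator (cyl Sp) v * G \<phi> m a v) \<in> borel_measurable \<nu>"
      unfolding measurable_cong_sets[OF sb refl]
      by (intro borel_measurable_times borel_measurable_indicator cyl_borel Smf
        borel_measurable_continuous_onI continuous_G cont)
    show "\<bar>indicator (cyl Sm) u\<bar> \<le> (1::real)" for u by (simp add: indicator_def)
    show "\<bar>indicator (cyl Sp) v * G \<phi> m a v\<bar> \<le> 1" for v
      using G_pos[of \<phi> m a v] G_le1[of \<phi> m a v] by (simp add: abs_mult indicator_def)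
  qed
  also have "\<dots> = (\<integral>p. indicator (cyl S) (\<lambda>j. glue p (j + int n)) * Rt \<phi> a (\<lambda>j. (\<lambda>j. glue p (j + int n)) (j + i)) m \<partial>(rho \<Otimes>\<^sub>M \<nu>))"
    by (rule Bochner_Integration.integral_cong[OF refl])
       (auto simp: indicator_def cylX XR)
  also have "\<dots> = (\<integral>x. indicator (cyl S) x * Rt \<phi> a (\<lambda>j. x (j + i)) m \<partial>(mun \<nu> n))"
    using mun_integral[OF sb f2m, of n] by simp
  finally show ?thesis unfolding m_def .
qed



lemma prob_mun:
  fixes \<nu> :: "(nat \<Rightarrow> 'e::{finite,discrete_topology}) measure"
  assumes ps: "prob_space \<nu>" and sb: "sets \<nu> = sets borel"
  shows "prob_space (mun \<nu> n)"
proof -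
  interpret PP: pair_prob_space rho \<nu> by (rule pps[OF prob_rho ps])
  have p0: "prob_space (mu0 \<nu>)"
    unfolding mu0_def by (rule PP.P.prob_space_distr[OF measurable_glue[OF sb]])
  have sh: "(\<lambda>x i. x (i + int n)) \<in> measurable (mu0 \<nu>) (borel :: (int \<Rightarrow> 'e) measure)"
    using measurable_shift[of "int n"] by (simp add: mu0_def measurable_cong_sets[OF sets_distr refl])
  show ?thesis unfolding mun_def by (rule prob_space.prob_space_distr[OF p0 sh])
qed

lemma continuous_shift: "continuous_on UNIV (\<lambda>x :: int \<Rightarrow> 'e::topological_space. (\<lambda>j. x (j + i)))"
  by (intro continuous_on_coordinatewise_then_product) simp

lemma mu_site:
  fixes \<phi> :: "(nat \<Rightarrow> 'e::{finite,discrete_topology}) \<Rightarrow> real"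
    and \<nu> :: "(nat \<Rightarrow> 'e) measure" and \<mu> :: "(int \<Rightarrow> 'e) measure" and r :: "nat \<Rightarrow> nat"
    and S :: "(int \<times> 'e) set"
  assumes cont: "continuous_on UNIV \<phi>"
    and ext: "extensible \<phi>"
    and hg: "half_line_gibbs \<phi> \<nu>"
    and r: "strict_mono r"
    and ws: "weak_star_conv (\<lambda>k. mun \<nu> (r k)) \<mu>"
    and S: "finite S" "i \<notin> fst ` S"
  shows "(\<integral>x. indicator (cyl S) x * indicator {x. x i = a} x \<partial>\<mu>)
       = (\<integral>x. indicator (cyl S) x * Gam \<phi> a (\<lambda>j. x (j + i)) \<partial>\<mu>)"
proof -
  have ps: "prob_space \<nu>" and sb: "sets \<nu> = sets borel" using hg unfolding half_line_gibbs_def by auto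
  define F1 where "F1 x = (indicator (cyl S) x * indicator {x. x i = a} x :: real)" for x :: "int \<Rightarrow> 'e"
  define F2 where "F2 x = indicator (cyl S) x * Gam \<phi> a (\<lambda>j. x (j + i))" for x :: "int \<Rightarrow> 'e"
  define F3 where "F3 n x = indicator (cyl S) x * Rt \<phi> a (\<lambda>j. x (j + i)) n" for n and x :: "int \<Rightarrow> 'e"
  have cGs: "continuous_on UNIV (\<lambda>x :: int \<Rightarrow> 'e. Gam \<phi> a (\<lambda>j. x (j + i)))"
    by (rule continuous_on_compose2[OF continuous_Gam[OF cont ext] continuous_shift]) auto
  have c1: "continuous_on UNIV F1" unfolding F1_def
    by (intro continuous_on_mult continuous_ind_cyl S continuous_ind_coord)
  have c2: "continuous_on UNIV F2" unfolding F2_def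
    by (intro continuous_on_mult continuous_ind_cyl S cGs)
  have cRs: "continuous_on UNIV (\<lambda>x :: int \<Rightarrow> 'e. Rt \<phi> a (\<lambda>j. x (j + i)) n)" for n
  proof -
    have c2: "continuous_on UNIV (\<lambda>y :: int \<Rightarrow> 'e. Rt \<phi> a y n)"
      unfolding Rt_def
      by (intro continuous_intros continuous_on_compose2[OF continuous_Sn[OF cont] continuous_splice])
         (auto simp: sum_exp_pos[THEN less_imp_neq, symmetric])
    show ?thesis by (rule continuous_on_compose2[OF c2 continuous_shift]) auto
  qed
  have lim1: "(\<lambda>k. \<integral>x. F1 x \<partial>mun \<nu> (r k)) \<longlonglongrightarrow> (\<integral>x. F1 x \<partial>\<mu>)"
    using ws c1 unfolding weak_star_conv_def by blast
  have lim2: "(\<lambda>k. \<integral>x. F2 x \<partial>mun \<nu> (r k)) \<longlonglongrightarrow> (\<integral>x. F2 x \<partial>\<mu>)"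
    using ws c2 unfolding weak_star_conv_def by blast
  have fl: "filterlim (\<lambda>k. nat (int (r k) + i)) sequentially sequentially"
    unfolding filterlim_at_top
  proof
    fix Z :: nat
    show "\<forall>\<^sub>F k in sequentially. Z \<le> nat (int (r k) + i)"
      using eventually_ge_at_top[of "nat (int Z - i)"]
    proof (rule eventually_mono)
      fix x assume "nat (int Z - i) \<le> x"
      then have "int Z - i \<le> int x" by (simp add: nat_le_iff)
      moreover have "x \<le> r x" by (rule seq_suble[OF r])
      ultimately have "int Z \<le> int (r x) + i" by linarith
      then show "Z \<le> nat (int (r x) + i)" by linarith
    qed
  qed
  have ev_pos: "\<forall>\<^sub>F k in sequentially. 0 \<le> int (r k) + i"
    using eventually_ge_at_top[of "nat (- i)"]
  proof (rule eventually_mono)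
    fix x assume "nat (- i) \<le> x"
    then have "- i \<le> int x" by (simp add: nat_le_iff)
    moreover have "x \<le> r x" by (rule seq_suble[OF r])
    ultimately show "0 \<le> int (r x) + i" by linarith
  qed
  have diff0: "(\<lambda>k. (\<integral>x. F1 x \<partial>mun \<nu> (r k)) - (\<integral>x. F2 x \<partial>mun \<nu> (r k))) \<longlonglongrightarrow> 0"
  proof (rule LIMSEQ_I)
    fix e :: real assume e: "0 < e"
    have "\<forall>\<^sub>F n in sequentially. \<forall>x. \<bar>Rt \<phi> a x n - Gam \<phi> a x\<bar> \<le> e / 2"
      by (rule Rt_Gam_unif[OF ext]) (use e in simp)
    then have ev: "\<forall>\<^sub>F k in sequentially. \<forall>x. \<bar>Rt \<phi> a x (nat (int (r k) + i)) - Gam \<phi> a x\<bar> \<le> e / 2"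
      by (rule eventually_compose_filterlim[OF _ fl])
    have "\<forall>\<^sub>F k in sequentially. norm ((\<integral>x. F1 x \<partial>mun \<nu> (r k)) - (\<integral>x. F2 x \<partial>mun \<nu> (r k)) - 0) < e"
      using ev ev_pos
    proof (eventually_elim)
      case (elim k)
      define n where "n = nat (int (r k) + i)"
      interpret P: prob_space "mun \<nu> (r k)" by (rule prob_mun[OF ps sb])
      have sbm: "sets (mun \<nu> (r k)) = sets borel" by (simp add: mun_def)
      have mcs: "measurable (mun \<nu> (r k)) = measurable borel"
        by (intro HOL.ext measurable_cong_sets[OF sbm refl])
      have eq1: "(\<integral>x. F1 x \<partial>mun \<nu> (r k)) = (\<integral>x. F3 n x \<partial>mun \<nu> (r k))"
        unfolding F1_def F3_def n_def by (rule mun_site[OF hg cont S elim(2)])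
      have bnd: "\<bar>F3 n x - F2 x\<bar> \<le> e / 2" for x
      proof -
        have "\<bar>F3 n x - F2 x\<bar> = indicator (cyl S) x * \<bar>Rt \<phi> a (\<lambda>j. x (j + i)) n - Gam \<phi> a (\<lambda>j. x (j + i))\<bar>"
          unfolding F3_def F2_def by (simp add: indicator_def)
        also have "\<dots> \<le> 1 * (e / 2)"
          using elim(1)[rule_format, of "\<lambda>j. x (j + i)"] e
          by (intro mult_mono) (auto simp: indicator_def n_def)
        finally show ?thesis by simp
      qed
      have m3: "F3 n \<in> borel_measurable (mun \<nu> (r k))"
        unfolding mcs F3_def
        by (intro borel_measurable_times borel_measurable_indicator cyl_borel S
            borel_measurable_continuous_onI cRs)
      have m2: "F2 \<in> borel_measurable (mun \<nu> (r k))"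
        unfolding mcs by (rule borel_measurable_continuous_onI[OF c2])
      have b3: "\<bar>F3 n x\<bar> \<le> 1" for x
      proof -
        have "0 < Rt \<phi> a (\<lambda>j. x (j + i)) n" "Rt \<phi> a (\<lambda>j. x (j + i)) n \<le> 1"
          unfolding Rt_alt using sum_exp_ge1[of "\<lambda>b. Dsum \<phi> a b n (\<lambda>j. x (j + i))" a] by auto
        then show ?thesis unfolding F3_def by (simp add: abs_mult indicator_def)
      qed
      have b2: "\<bar>F2 x\<bar> \<le> 1" for x
        using Gam_pos[of \<phi> a "\<lambda>j. x (j + i)"] Gam_le1[of \<phi> a "\<lambda>j. x (j + i)"]
        unfolding F2_def by (simp add: abs_mult indicator_def)
      have i3: "integrable (mun \<nu> (r k)) (F3 n)"
        using b3 by (intro P.integrable_const_bound[of _ 1] m3) auto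
      have i2: "integrable (mun \<nu> (r k)) F2"
        using b2 by (intro P.integrable_const_bound[of _ 1] m2) auto
      have d: "(\<integral>x. F3 n x \<partial>mun \<nu> (r k)) - (\<integral>x. F2 x \<partial>mun \<nu> (r k)) = (\<integral>x. F3 n x - F2 x \<partial>mun \<nu> (r k))"
        by (rule Bochner_Integration.integral_diff[OF i3 i2, symmetric])
      have u1: "(\<integral>x. F3 n x - F2 x \<partial>mun \<nu> (r k)) \<le> e / 2"
      proof (rule P.integral_le_const)
        show "integrable (mun \<nu> (r k)) (\<lambda>x. F3 n x - F2 x)" by (intro Bochner_Integration.integrable_diff i3 i2)
        show "AE x in mun \<nu> (r k). F3 n x - F2 x \<le> e / 2"
          by (intro AE_I2) (metis abs_le_iff bnd)
      qed
      have u2: "(\<integral>x. - (F3 n x - F2 x) \<partial>mun \<nu> (r k)) \<le> e / 2"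
      proof (rule P.integral_le_const)
        show "integrable (mun \<nu> (r k)) (\<lambda>x. - (F3 n x - F2 x))"
          by (intro Bochner_Integration.integrable_minus Bochner_Integration.integrable_diff i3 i2)
        show "AE x in mun \<nu> (r k). - (F3 n x - F2 x) \<le> e / 2"
          by (intro AE_I2) (metis abs_le_iff bnd)
      qed
      have "\<bar>(\<integral>x. F3 n x - F2 x \<partial>mun \<nu> (r k))\<bar> \<le> e / 2"
      proof -
        have "- (\<integral>x. F3 n x - F2 x \<partial>mun \<nu> (r k)) \<le> e / 2"
          using u2 by (simp only: Bochner_Integration.integral_minus)
        then show ?thesis using u1 by (simp only: abs_le_iff)
      qed
      then show ?case unfolding eq1 d using e by simp
    qed
    then show "\<exists>no. \<forall>k\<ge>no. norm ((\<integral>x. F1 x \<partial>mun \<nu> (r k)) - (\<integral>x. F2 x \<partial>mun \<nu> (r k)) - 0) < e"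
      unfolding eventually_sequentially .
  qed
  have "(\<lambda>k. (\<integral>x. F1 x \<partial>mun \<nu> (r k)) - (\<integral>x. F2 x \<partial>mun \<nu> (r k))) \<longlonglongrightarrow> (\<integral>x. F1 x \<partial>\<mu>) - (\<integral>x. F2 x \<partial>\<mu>)"
    by (rule tendsto_diff[OF lim1 lim2])
  with diff0 have "(\<integral>x. F1 x \<partial>\<mu>) - (\<integral>x. F2 x \<partial>\<mu>) = 0" by (rule LIMSEQ_unique[rotated])
  then show ?thesis unfolding F1_def F2_def by simp
qed



lemma Gam_upd0: "Gam \<phi> a (y(0 := c)) = Gam \<phi> a y"
proof -
  have "splice (y(0 := c)) 0 b k = splice y 0 b k" for b k
    by (auto simp: splice_def fun_eq_iff)
  then show ?thesis unfolding Gam_def Lim_def Dsum_def by simp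
qed

lemma cond_exp_site:
  fixes \<phi> :: "(nat \<Rightarrow> 'e::{finite,discrete_topology}) \<Rightarrow> real"
    and \<nu> :: "(nat \<Rightarrow> 'e) measure" and \<mu> :: "(int \<Rightarrow> 'e) measure" and r :: "nat \<Rightarrow> nat"
  assumes cont: "continuous_on UNIV \<phi>"
    and ext: "extensible \<phi>"
    and hg: "half_line_gibbs \<phi> \<nu>"
    and r: "strict_mono r"
    and pm: "prob_space \<mu>" and sm: "sets \<mu> = sets borel"
    and ws: "weak_star_conv (\<lambda>k. mun \<nu> (r k)) \<mu>"
  shows "AE x in \<mu>. real_cond_exp \<mu> (coord_algebra (- {i})) (indicator {y. y i = a}) x
            = Gam \<phi> a (\<lambda>j. x (j + i))"
proof -
  let ?F = "coord_algebra (- {i}) :: (int \<Rightarrow> 'e) measure"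
  interpret P: prob_space \<mu> by (rule pm)
  interpret S: sigma_finite_subalgebra \<mu> ?F
    by (rule coord_subalg[OF P.finite_measure_axioms sm])
  have mcs: "measurable \<mu> = measurable borel"
    by (intro HOL.ext measurable_cong_sets[OF sm refl])
  have spm: "space \<mu> = UNIV" using sm by (metis sets_eq_imp_space_eq space_borel)
  define f where "f = (indicator {y. y i = a} :: (int \<Rightarrow> 'e) \<Rightarrow> real)"
  define g where "g x = Gam \<phi> a (\<lambda>j. x (j + i))" for x :: "int \<Rightarrow> 'e"
  have fm: "f \<in> borel_measurable \<mu>" unfolding mcs f_def
    by (intro borel_measurable_indicator coord_borel)
  have cg: "continuous_on UNIV g" unfolding g_def
    by (rule continuous_on_compose2[OF continuous_Gam[OF cont ext] continuous_shift]) auto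
  have gm: "g \<in> borel_measurable \<mu>" unfolding mcs by (rule borel_measurable_continuous_onI[OF cg])
  have fb: "\<bar>f x\<bar> \<le> 1" for x by (simp add: f_def indicator_def)
  have gb: "\<bar>g x\<bar> \<le> 1" for x 
    using Gam_pos[of \<phi> a "\<lambda>j. x (j + i)"] Gam_le1[of \<phi> a "\<lambda>j. x (j + i)"] by (simp add: g_def)
  have fi: "integrable \<mu> f" using fb by (intro P.integrable_const_bound[of _ 1] fm) auto
  have gi: "integrable \<mu> g" using gb by (intro P.integrable_const_bound[of _ 1] gm) auto
  have gF: "g \<in> borel_measurable ?F"
  proof -
    define \<tau> where "\<tau> x = (\<lambda>j. if j = 0 then undefined else x (j + i))" for x :: "int \<Rightarrow> 'e"
    have "\<tau> \<in> measurable ?F borel"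
    proof (rule measurable_from_coord)
      fix j :: int
      show "(\<exists>c. \<forall>x. \<tau> x j = c) \<or> (\<exists>k\<in>- {i}. \<forall>x. \<tau> x j = x k)"
        by (cases "j = 0") (auto simp: \<tau>_def)
    qed
    moreover have "Gam \<phi> a \<in> borel_measurable borel"
      by (rule borel_measurable_continuous_onI[OF continuous_Gam[OF cont ext]])
    ultimately have "(\<lambda>x. Gam \<phi> a (\<tau> x)) \<in> borel_measurable ?F" by (rule measurable_compose)
    moreover have "Gam \<phi> a (\<tau> x) = g x" for x
    proof -
      have "\<tau> x = (\<lambda>j. x (j + i))(0 := undefined)" by (auto simp: \<tau>_def fun_eq_iff)
      then show ?thesis by (simp add: Gam_upd0 g_def)
    qed
    ultimately show ?thesis by simp
  qed
  define C where "C = {cyl T | T :: (int \<times> 'e) set. finite T \<and> fst ` T \<subseteq> - {i}}"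
  have Cstab: "Int_stable C"
    unfolding Int_stable_def C_def
  proof (safe)
    fix T1 T2 :: "(int \<times> 'e) set"
    assume "finite T1" "fst ` T1 \<subseteq> - {i}" "finite T2" "fst ` T2 \<subseteq> - {i}"
    moreover have "cyl T1 \<inter> cyl T2 = cyl (T1 \<union> T2)" by (simp add: cyl_def ball_Un Collect_conj_eq)
    ultimately show "\<exists>T. cyl T1 \<inter> cyl T2 = cyl T \<and> finite T \<and> fst ` T \<subseteq> - {i}"
      by (intro exI[of _ "T1 \<union> T2"]) auto
  qed
  have C_sub: "sigma_sets UNIV C \<subseteq> sets \<mu>"
  proof -
    have "C \<subseteq> sets \<mu>" unfolding C_def sm using cyl_borel by blast
    then show ?thesis using sets.sigma_sets_subset[of C \<mu>] spm by simp
  qed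
  have F_sub: "sets ?F \<subseteq> sigma_sets UNIV C"
    unfolding sets_coord_algebra
  proof (rule sigma_sets_mono)
    show "coordgen (- {i}) \<subseteq> sigma_sets UNIV C"
    proof
      fix A :: "(int \<Rightarrow> 'e) set" assume "A \<in> coordgen (- {i})"
      then obtain j b where A: "A = {y. y j = b}" "j \<noteq> i" by (auto simp: coordgen_def)
      have "A = cyl {(j, b)}" by (auto simp: A cyl_def)
      moreover have "cyl {(j, b)} \<in> C" unfolding C_def using A(2)
        by (intro CollectI exI[of _ "{(j, b)}"]) auto
      ultimately have "A \<in> C" by simp
      then show "A \<in> sigma_sets UNIV C" by (rule sigma_sets.Basic)
    qed
  qed
  define Q where "Q A \<longleftrightarrow> (\<integral>x. indicator A x * f x \<partial>\<mu>) = (\<integral>x. indicator A x * g x \<partial>\<mu>)" for A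
  have QC: "Q A" if "A \<in> C" for A
  proof -
    obtain T where T: "A = cyl T" "finite T" "fst ` T \<subseteq> - {i}" using \<open>A \<in> C\<close> by (auto simp: C_def)
    have "i \<notin> fst ` T" using T(3) by auto
    show ?thesis unfolding Q_def T(1) f_def g_def
      by (rule mu_site[OF cont ext hg r ws T(2) \<open>i \<notin> fst ` T\<close>])
  qed
  have UNIV_C: "UNIV \<in> C" unfolding C_def by (intro CollectI exI[of _ "{}"]) (auto simp: cyl_def)
  have int_ind: "integrable \<mu> (\<lambda>x. indicator A x * h x)" if "A \<in> sets \<mu>" "integrable \<mu> h" for A and h :: "_ \<Rightarrow> real"
    using integrable_mult_indicator[OF that] by simp
  have CP: "C \<subseteq> Pow UNIV" by simp
  have QA: "Q A" if "A \<in> sigma_sets UNIV C" for A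
    using Cstab CP that
  proof (induct rule: sigma_sets_induct_disjoint)
    case (basic A) then show ?case by (rule QC)
  next
    case empty then show ?case by (simp add: Q_def)
  next
    case (compl A)
    have Asets: "A \<in> sets \<mu>" using compl(1) C_sub by auto
    have Q1: "Q UNIV" by (rule QC[OF UNIV_C])
    have e: "indicator (UNIV - A) x * h x = h x - indicator A x * h x" for x and h :: "_ \<Rightarrow> real"
      by (simp add: indicator_def)
    have "(\<integral>x. indicator (UNIV - A) x * f x \<partial>\<mu>) = (\<integral>x. f x \<partial>\<mu>) - (\<integral>x. indicator A x * f x \<partial>\<mu>)"
      unfolding e by (rule Bochner_Integration.integral_diff[OF fi int_ind[OF Asets fi]])
    also have "\<dots> = (\<integral>x. g x \<partial>\<mu>) - (\<integral>x. indicator A x * g x \<partial>\<mu>)"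
      using Q1 compl(2) by (simp add: Q_def)
    also have "\<dots> = (\<integral>x. indicator (UNIV - A) x * g x \<partial>\<mu>)"
      unfolding e by (rule Bochner_Integration.integral_diff[OF gi int_ind[OF Asets gi], symmetric])
    finally show ?case by (simp add: Q_def)
  next
    case (union A)
    have Asets: "\<And>n. A n \<in> sets \<mu>" using union(2) C_sub by auto
    have Us: "(\<Union>n. A n) \<in> sets \<mu>" using Asets by auto
    have disj: "\<And>n m. n \<noteq> m \<Longrightarrow> A n \<inter> A m = {}" using union(1) by (auto simp: disjoint_family_on_def)
    have cadd: "(\<integral>x. indicator (\<Union>n. A n) x * h x \<partial>\<mu>) = (\<Sum>n. (\<integral>x. indicator (A n) x * h x \<partial>\<mu>))"
      if "integrable \<mu> h" for h :: "_ \<Rightarrow> real"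
    proof -
      have "set_integrable \<mu> (\<Union>n. A n) h"
        unfolding set_integrable_def using integrable_mult_indicator[OF Us that] by simp
      from lebesgue_integral_countable_add[OF Asets disj this]
      show ?thesis unfolding set_lebesgue_integral_def by simp
    qed
    show ?case unfolding Q_def cadd[OF fi] cadd[OF gi]
      using union(3) by (simp add: Q_def)
  qed
  show ?thesis
    unfolding f_def[symmetric] g_def[symmetric]
  proof (rule S.real_cond_exp_charact[OF _ fi gi gF])
    fix A assume "A \<in> sets ?F"
    then have "Q A" using F_sub QA by auto
    then show "(\<integral>x\<in>A. f x \<partial>\<mu>) = (\<integral>x\<in>A. g x \<partial>\<mu>)"
      unfolding Q_def set_lebesgue_integral_def by simp
  qed
qed



theorem theoremA:
  fixes \<phi> :: "(nat \<Rightarrow> 'e::{finite,discrete_topology}) \<Rightarrow> real"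
    and \<nu> :: "(nat \<Rightarrow> 'e) measure" and \<mu> :: "(int \<Rightarrow> 'e) measure" and r :: "nat \<Rightarrow> nat"
  assumes "continuous_on UNIV \<phi>"
    and "extensible \<phi>"
    and "half_line_gibbs \<phi> \<nu>"
    and "strict_mono r"
    and "prob_space \<mu>" and "sets \<mu> = sets borel"
    and "weak_star_conv (\<lambda>k. mun \<nu> (r k)) \<mu>"
  shows "(AE x in \<mu>.
           real_cond_exp \<mu> (coord_algebra (- {0})) (indicator {y. y 0 = x 0}) x = gamma \<phi> 0 (x 0) x
         \<and> (\<lambda>n. exp (Sn \<phi> (n + 1) (splice x 0 (x 0) n))
               / (\<Sum>b\<in>UNIV. exp (Sn \<phi> (n + 1) (splice x 0 b n)))) \<longlonglongrightarrow> gamma \<phi> 0 (x 0) x)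
         \<and> whole_line_gibbs \<phi> \<mu>"
proof -
  note ce = cond_exp_site[OF assms]
  have site: "AE x in \<mu>. real_cond_exp \<mu> (coord_algebra (- {i})) (indicator {y. y i = a}) x = gamma \<phi> i a x"
    for i a
    using ce[of i a] by (simp add: gamma_shift[OF assms(2)])
  have wl: "whole_line_gibbs \<phi> \<mu>"
    unfolding whole_line_gibbs_def using assms(5,6) site by blast
  have "AE x in \<mu>. \<forall>a. real_cond_exp \<mu> (coord_algebra (- {0})) (indicator {y. y 0 = a}) x = gamma \<phi> 0 a x"
    using site[of 0] by (subst AE_all_countable) auto
  then have "AE x in \<mu>.
           real_cond_exp \<mu> (coord_algebra (- {0})) (indicator {y. y 0 = x 0}) x = gamma \<phi> 0 (x 0) x
         \<and> (\<lambda>n. exp (Sn \<phi> (n + 1) (splice x 0 (x 0) n))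
               / (\<Sum>b\<in>UNIV. exp (Sn \<phi> (n + 1) (splice x 0 b n)))) \<longlonglongrightarrow> gamma \<phi> 0 (x 0) x"
  proof (rule AE_mp, intro AE_I2 impI conjI)
    fix x assume H: "\<forall>a. real_cond_exp \<mu> (coord_algebra (- {0})) (indicator {y. y 0 = a}) x = gamma \<phi> 0 a x"
    show "real_cond_exp \<mu> (coord_algebra (- {0})) (indicator {y. y 0 = x 0}) x = gamma \<phi> 0 (x 0) x"
      using H by blast
    show "(\<lambda>n. exp (Sn \<phi> (n + 1) (splice x 0 (x 0) n))
               / (\<Sum>b\<in>UNIV. exp (Sn \<phi> (n + 1) (splice x 0 b n)))) \<longlonglongrightarrow> gamma \<phi> 0 (x 0) x"
      using Rt_tendsto[OF assms(2), of "x 0" x] unfolding Rt_def gamma0[OF assms(2)] .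
  qed
  with wl show ?thesis by blast
qed

end
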